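(* Let $J\subset\mathbb{C}$ be a $C^1$ Jordan curve, i.e. $J=\gamma(\mathbb{R}/2\pi\mathbb{Z})$ for an injective $C^1$ map $\gamma:\mathbb{R}/2\pi\mathbb{Z}\to\mathbb{C}$ with $\gamma'\neq0$, and let $n\ge3$. Let \[ W=\Big\{(a_1,\dots,a_n)\in\mathbb{R}_{+}^n:\ a_i<\sum\nolimits_{j\ne i}a_j \text{ for } i=1,\dots,n\Big\}. \] Then for every $A_0\in J$ (reparametrize so that $\gamma(0)=A_0$) and for Lebesgue-almost every $(a_1,\dots,a_n)\in W$, the set of tuples $(\sigma_1,\dots,\sigma_{n-1},\lambda)$ with $0<\sigma_1<\dots<\sigma_{n-1}<2\pi$, $\lambda>0$ and \[ |\gamma(\sigma_i)-\gamma(\sigma_{i-1})|=\lambda a_i\quad (i=1,\dots,n),\qquad \sigma_0=0,\ \sigma_n=2\pi, \] is finite. That is, there are at most finitely many neatly $J$-cyclic polygons with starting vertex $A_0$ and side lengths $a_1,\dots,a_n$.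
   Context: A polygon $Q_n=A_0\cdots A_{n-1}$ is neatly $J$-cyclic (for an oriented Jordan curve $J$) if it has a similar copy whose vertices lie on $J$ in this order according to the orientation of $J$; here its starting vertex on $J$ is required to be $A_0$. *)

theory Defs
  imports "HOL-Analysis.Analysis"
begin

definition C1_jordan_param :: "(real \<Rightarrow> complex) \<Rightarrow> bool" where
  "C1_jordan_param \<gamma> \<longleftrightarrow>
     (\<forall>t. \<gamma> (t + 2 * pi) = \<gamma> t) \<and>
     \<gamma> C1_differentiable_on UNIV \<and>
     (\<forall>t. vector_derivative \<gamma> (at t) \<noteq> 0) \<and>
     (\<forall>s\<in>{0..<2*pi}. \<forall>t\<in>{0..<2*pi}. \<gamma> s = \<gamma> t \<longrightarrow> s = t)"

text \<open>The set W, with the n side lengths a_1..a_n stored as a 0 .. a (n-1).\<close>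
definition polygon_sides :: "nat \<Rightarrow> (nat \<Rightarrow> real) set" where
  "polygon_sides n = {a. \<forall>i<n. 0 < a i \<and> a i < (\<Sum>j\<in>{..<n} - {i}. a j)}"

definition vparam :: "nat \<Rightarrow> real list \<Rightarrow> nat \<Rightarrow> real" where
  "vparam n s i = (if i = 0 then 0 else if i = n then 2 * pi else s ! (i - 1))"

text \<open>Tuples (sigma_1..sigma_(n-1), lambda) giving neatly J-cyclic polygons starting at
  gamma t0 with side lengths a_1..a_n (curve reparametrised as sigma \<mapsto> gamma (t0 + sigma)).\<close>
definition neat_cyclic_params ::
    "(real \<Rightarrow> complex) \<Rightarrow> real \<Rightarrow> nat \<Rightarrow> (nat \<Rightarrow> real) \<Rightarrow> (real list \<times> real) set" where
  "neat_cyclic_params \<gamma> t0 n a =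
     {(s, l). length s = n - 1 \<and> 0 < l \<and>
        (\<forall>i<n. vparam n s i < vparam n s (Suc i)) \<and>
        (\<forall>i<n. cmod (\<gamma> (t0 + vparam n s (Suc i)) - \<gamma> (t0 + vparam n s i)) = l * a i)}"

end

theory Submission
  imports Defs "Jordan_Normal_Form.Determinant"
begin


lemma slab_sets:
  fixes V :: "nat set" and c w :: "nat \<Rightarrow> real"
  shows "{z \<in> PiE V (\<lambda>_. UNIV). (\<forall>i\<in>V-{k}. \<bar>z i - c i\<bar> \<le> r) \<and> \<bar>\<Sum>i\<in>V. w i * (z i - c i)\<bar> \<le> e}
     \<in> sets (PiM V (\<lambda>_. lborel))"
proof -
  have "{z \<in> space (PiM V (\<lambda>_. lborel)). (\<forall>i\<in>V-{k}. \<bar>z i - c i\<bar> \<le> r) \<and> \<bar>\<Sum>i\<in>V. w i * (z i - c i)\<bar> \<le> e}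
     \<in> sets (PiM V (\<lambda>_. lborel))"
    by measurable
  then show ?thesis by (simp add: space_PiM)
qed

lemma slab_measure:
  fixes V :: "nat set" and c w :: "nat \<Rightarrow> real"
  assumes V: "finite V" "k \<in> V" and wk: "w k = 1" and r: "r \<ge> 0" and e: "e \<ge> 0"
  shows "emeasure (PiM V (\<lambda>_. lborel))
     {z \<in> PiE V (\<lambda>_. UNIV). (\<forall>i\<in>V-{k}. \<bar>z i - c i\<bar> \<le> r) \<and> \<bar>\<Sum>i\<in>V. w i * (z i - c i)\<bar> \<le> e}
     \<le> ennreal ((2*r)^(card V - 1) * (2*e))"
proof -
  interpret product_sigma_finite "\<lambda>_. lborel" by standard
  define Sl where "Sl = {z \<in> PiE V (\<lambda>_. UNIV). (\<forall>i\<in>V-{k}. \<bar>z i - c i\<bar> \<le> r) \<and> \<bar>\<Sum>i\<in>V. w i * (z i - c i)\<bar> \<le> e}"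
  define I where "I = V - {k}"
  have VI: "V = insert k I" "k \<notin> I" "finite I" using V by (auto simp: I_def)
  define B where "B = PiE I (\<lambda>i. {c i - r..c i + r})"
  define \<phi> where "\<phi> (x::nat\<Rightarrow>real) = c k - (\<Sum>i\<in>I. w i * (x i - c i))" for x
  have Slm: "Sl \<in> sets (PiM V (\<lambda>_. lborel))" unfolding Sl_def by (rule slab_sets)
  have "emeasure (PiM V (\<lambda>_. lborel)) Sl = \<integral>\<^sup>+ z. indicator Sl z \<partial>(PiM V (\<lambda>_. lborel))"
    using Slm by simp
  also have "\<dots> = \<integral>\<^sup>+ x. (\<integral>\<^sup>+ y. indicator Sl (x(k := y)) \<partial>lborel) \<partial>(PiM I (\<lambda>_. lborel))"
    unfolding VI(1) by (rule product_nn_integral_insert) (use VI Slm in auto)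
  also have "\<dots> \<le> \<integral>\<^sup>+ x. ennreal (2*e) * indicator B x \<partial>(PiM I (\<lambda>_. lborel))"
  proof (rule nn_integral_mono)
    fix x :: "nat \<Rightarrow> real" assume x: "x \<in> space (PiM I (\<lambda>_. lborel))"
    have "(\<integral>\<^sup>+ y. indicator Sl (x(k := y)) \<partial>lborel) \<le>
          (\<integral>\<^sup>+ y. indicator B x * indicator {\<phi> x - e..\<phi> x + e} y \<partial>lborel)"
    proof (rule nn_integral_mono)
      fix y :: real
      show "indicator Sl (x(k := y)) \<le> (indicator B x * indicator {\<phi> x - e..\<phi> x + e} y :: ennreal)"
      proof (cases "x(k:=y) \<in> Sl")
        case True
        have xI: "\<And>i. i \<in> I \<Longrightarrow> (x(k:=y)) i = x i" using VI by auto
        from True have "\<forall>i\<in>I. \<bar>x i - c i\<bar> \<le> r" unfolding Sl_def I_def using xI I_def by auto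
        moreover have "x \<in> PiE I (\<lambda>_. UNIV)" using x by (simp add: space_PiM)
        ultimately have "x \<in> B" unfolding B_def by (auto simp: abs_le_iff)
        have "(\<Sum>i\<in>V. w i * ((x(k:=y)) i - c i)) = w k * (y - c k) + (\<Sum>i\<in>I. w i * ((x(k:=y)) i - c i))"
          unfolding VI(1) using VI by (simp add: sum.insert)
        also have "\<dots> = (y - c k) + (\<Sum>i\<in>I. w i * (x i - c i))" using wk xI by (simp cong: sum.cong)
        finally have "\<bar>(y - c k) + (\<Sum>i\<in>I. w i * (x i - c i))\<bar> \<le> e" using True unfolding Sl_def by simp
        then have "y \<in> {\<phi> x - e..\<phi> x + e}" unfolding \<phi>_def by (auto simp: abs_le_iff)
        with \<open>x \<in> B\<close> show ?thesis by (simp add: indicator_def)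
      qed (simp)
    qed
    also have "\<dots> = indicator B x * (\<integral>\<^sup>+ y. indicator {\<phi> x - e..\<phi> x + e} y \<partial>lborel)"
      by (rule nn_integral_cmult) simp
    also have "\<dots> = indicator B x * ennreal (2*e)" using e by simp
    finally show "(\<integral>\<^sup>+ y. indicator Sl (x(k := y)) \<partial>lborel) \<le> ennreal (2*e) * indicator B x"
      by (simp add: mult.commute)
  qed
  also have "\<dots> = ennreal (2*e) * emeasure (PiM I (\<lambda>_. lborel)) B"
    by (rule nn_integral_cmult_indicator) (use VI in \<open>auto simp: B_def intro!: sets_PiM_I_finite\<close>)
  also have "emeasure (PiM I (\<lambda>_. lborel)) B = (\<Prod>i\<in>I. emeasure lborel {c i - r..c i + r})"
    unfolding B_def by (rule emeasure_PiM) (use VI in auto)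
  also have "\<dots> = (\<Prod>i\<in>I. ennreal (2*r))" using r by (intro prod.cong) auto
  also have "\<dots> = ennreal ((2*r)^card I)" using r by (simp add: prod_ennreal ennreal_power)
  also have "card I = card V - 1" using VI by simp
  finally show ?thesis unfolding Sl_def using r e by (simp add: ennreal_mult' mult.commute)
qed


definition sardQ :: "nat set \<Rightarrow> (nat\<Rightarrow>real) set \<Rightarrow> ((nat\<Rightarrow>real)\<Rightarrow>(nat\<Rightarrow>real)) \<Rightarrow> real \<Rightarrow> real \<Rightarrow> real
   \<Rightarrow> (nat\<Rightarrow>real) \<Rightarrow> nat \<Rightarrow> (nat\<Rightarrow>real) \<Rightarrow> bool"
  where "sardQ V S G \<epsilon> Mb \<delta> x k w \<longleftrightarrow> k\<in>V \<and> w k = 1 \<and> (\<forall>i\<in>V. \<bar>w i\<bar> \<le> 1) \<and>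
    (\<forall>r y. 0 \<le> r \<longrightarrow> r \<le> \<delta> \<longrightarrow> y\<in>S \<longrightarrow> (\<forall>i\<in>V. \<bar>y i - x i\<bar> \<le> r) \<longrightarrow>
        (\<forall>i\<in>V. \<bar>G y i - G x i\<bar> \<le> Mb*r) \<and> \<bar>\<Sum>i\<in>V. w i * (G y i - G x i)\<bar> \<le> \<epsilon>*r)"

lemma sard_grid:
  fixes V :: "nat set" and S :: "(nat\<Rightarrow>real) set" and G :: "(nat\<Rightarrow>real)\<Rightarrow>(nat\<Rightarrow>real)" and R j :: nat and \<epsilon> Mb :: real
  assumes V: "finite V" "V \<noteq> {}" and \<epsilon>: "\<epsilon> \<ge> 0" and Mb: "Mb \<ge> 0"
    and GP: "\<And>x. x \<in> S \<Longrightarrow> G x \<in> PiE V (\<lambda>_. UNIV)"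
    and SP: "S \<subseteq> PiE V (\<lambda>_. UNIV)"
  defines "T \<equiv> {x\<in>S. (\<forall>i\<in>V. \<bar>x i\<bar> < real R) \<and> (\<exists>k w. sardQ V S G \<epsilon> Mb (1/real (Suc j)) x k w)}"
  shows "\<exists>N\<in>sets (PiM V (\<lambda>_. lborel)). G ` T \<subseteq> N \<and>
           emeasure (PiM V (\<lambda>_. lborel)) N \<le> ennreal ((2*real R)^card V * (2*Mb)^(card V - 1) * (2*\<epsilon>))"
proof -
  define h where "h = 1 / real (Suc j)"
  have h: "h > 0" by (simp add: h_def)
  define d where "d = card V"
  have d: "d \<ge> 1" using V by (simp add: d_def Suc_le_eq card_gt_0_iff)
  define Cube where "Cube c = {x \<in> PiE V (\<lambda>_. UNIV). \<forall>i\<in>V. of_int (c i) * h \<le> x i \<and> x i < (of_int (c i) + 1) * h}"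
    for c :: "nat \<Rightarrow> int"
  define L where "L = int R * int (Suc j)"
  define Cs where "Cs = PiE V (\<lambda>_. {-L..<L})"
  define Cs' where "Cs' = {c \<in> Cs. Cube c \<inter> T \<noteq> {}}"
  define pick where "pick c = (SOME (x,k,w). x \<in> Cube c \<inter> T \<and> sardQ V S G \<epsilon> Mb h x k w)" for c
  define Sl where "Sl c = (case pick c of (x,k,w) \<Rightarrow>
     {z \<in> PiE V (\<lambda>_. UNIV). (\<forall>i\<in>V-{k}. \<bar>z i - G x i\<bar> \<le> Mb*h) \<and> \<bar>\<Sum>i\<in>V. w i * (z i - G x i)\<bar> \<le> \<epsilon>*h})" for c
  define N where "N = (\<Union>c\<in>Cs'. Sl c)"
  have pick: "case pick c of (x,k,w) \<Rightarrow> x \<in> Cube c \<inter> T \<and> sardQ V S G \<epsilon> Mb h x k w" if "c \<in> Cs'" for c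
  proof -
    from that obtain x where x: "x \<in> Cube c \<inter> T" unfolding Cs'_def by auto
    then obtain k w where "sardQ V S G \<epsilon> Mb h x k w" unfolding T_def h_def by auto
    with x have "\<exists>p. case p of (x,k,w) \<Rightarrow> x \<in> Cube c \<inter> T \<and> sardQ V S G \<epsilon> Mb h x k w" by auto
    then show ?thesis unfolding pick_def by (rule someI_ex)
  qed
  have finCs: "finite Cs" unfolding Cs_def using V by (simp add: finite_PiE)
  have cardCs: "card Cs = nat (2*L) ^ d" unfolding Cs_def d_def using V by (simp add: card_PiE)
  have Slsets: "Sl c \<in> sets (PiM V (\<lambda>_. lborel))" for c
    unfolding Sl_def by (cases "pick c") (simp add: slab_sets)
  have Slmeas: "emeasure (PiM V (\<lambda>_. lborel)) (Sl c) \<le> ennreal ((2*(Mb*h))^(d - 1) * (2*(\<epsilon>*h)))" if "c \<in> Cs'" for c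
  proof -
    obtain x k w where p: "pick c = (x,k,w)" by (cases "pick c") auto
    with pick[OF that] have "sardQ V S G \<epsilon> Mb h x k w" by auto
    then have "k \<in> V" "w k = 1" unfolding sardQ_def by auto
    then show ?thesis unfolding Sl_def p d_def using V h Mb \<epsilon>
      by (simp only: prod.case) (rule slab_measure, auto)
  qed
  have sub: "G ` T \<subseteq> N"
  proof
    fix z assume "z \<in> G ` T"
    then obtain y where y: "y \<in> T" "z = G y" by auto
    define c where "c i = (if i \<in> V then \<lfloor>y i / h\<rfloor> else undefined)" for i
    have yc: "y \<in> Cube c" using y(1) SP h unfolding Cube_def T_def c_def
      by (auto simp: floor_divide_lower floor_divide_upper)
    have "c \<in> Cs"
    proof -
      have "c i \<in> {-L..<L}" if "i \<in> V" for i
      proof -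
        have yi: "\<bar>y i\<bar> < real R" using y(1) that unfolding T_def by auto
        have hL: "real_of_int L * h = real R" unfolding L_def h_def by simp
        have "y i / h < real_of_int L" using yi h hL by (simp add: divide_less_eq mult.commute)
        moreover have "- real_of_int L < y i / h" using yi h hL by (simp add: less_divide_eq mult.commute)
        ultimately show ?thesis using that unfolding c_def by (auto simp: floor_less_iff le_floor_iff)
      qed
      then show ?thesis unfolding Cs_def c_def by auto
    qed
    then have cC: "c \<in> Cs'" unfolding Cs'_def using yc y(1) by auto
    obtain x k w where p: "pick c = (x,k,w)" by (cases "pick c") auto
    with pick[OF cC] have x: "x \<in> Cube c" "x \<in> T" and Q: "sardQ V S G \<epsilon> Mb h x k w" by auto
    have close: "\<forall>i\<in>V. \<bar>y i - x i\<bar> \<le> h"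
    proof
      fix i assume "i \<in> V"
      then have "of_int (c i) * h \<le> x i \<and> x i < (of_int (c i) + 1) * h"
                "of_int (c i) * h \<le> y i \<and> y i < (of_int (c i) + 1) * h"
        using x(1) yc unfolding Cube_def by auto
      then show "\<bar>y i - x i\<bar> \<le> h" by (auto simp: algebra_simps abs_le_iff)
    qed
    have "y \<in> S" using y(1) unfolding T_def by auto
    with Q close h have "(\<forall>i\<in>V. \<bar>G y i - G x i\<bar> \<le> Mb*h) \<and> \<bar>\<Sum>i\<in>V. w i * (G y i - G x i)\<bar> \<le> \<epsilon>*h"
      unfolding sardQ_def by auto
    moreover have "G y \<in> PiE V (\<lambda>_. UNIV)" using GP \<open>y \<in> S\<close> by auto
    ultimately have "z \<in> Sl c" unfolding Sl_def p y(2) by auto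
    then show "z \<in> N" unfolding N_def using cC by auto
  qed
  have Nsets: "N \<in> sets (PiM V (\<lambda>_. lborel))"
    unfolding N_def using finCs Slsets by (intro sets.finite_UN) (auto simp: Cs'_def)
  have "emeasure (PiM V (\<lambda>_. lborel)) N \<le> (\<Sum>c\<in>Cs'. emeasure (PiM V (\<lambda>_. lborel)) (Sl c))"
    unfolding N_def using finCs Slsets by (intro emeasure_subadditive_finite) (auto simp: Cs'_def)
  also have "\<dots> \<le> (\<Sum>c\<in>Cs'. ennreal ((2*(Mb*h))^(d - 1) * (2*(\<epsilon>*h))))"
    by (intro sum_mono Slmeas)
  also have "\<dots> = of_nat (card Cs') * ennreal ((2*(Mb*h))^(d - 1) * (2*(\<epsilon>*h)))" by simp
  also have "\<dots> \<le> of_nat (card Cs) * ennreal ((2*(Mb*h))^(d - 1) * (2*(\<epsilon>*h)))"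
    using finCs by (intro mult_right_mono) (auto simp: Cs'_def intro!: card_mono)
  also have "\<dots> = ennreal (real (card Cs) * ((2*(Mb*h))^(d - 1) * (2*(\<epsilon>*h))))"
    by (simp add: ennreal_mult' ennreal_of_nat_eq_real_of_nat)
  also have eqR: "real (card Cs) * ((2*(Mb*h))^(d - 1) * (2*(\<epsilon>*h))) = (2*real R)^d * (2*Mb)^(d - 1) * (2*\<epsilon>)"
  proof -
    have L0: "L \<ge> 0" unfolding L_def by simp
    have eq1: "real (card Cs) = (2 * real R * real (Suc j))^d" unfolding cardCs L_def using L0
      by (simp add: of_nat_power power_mult_distrib mult.assoc)
    have eq2: "h^(d-1) * h * real (Suc j)^d = 1"
    proof -
      have "h^(d-1) * h = h^d" using d by (cases d) (auto simp: mult.commute)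
      moreover have "h * real (Suc j) = 1" unfolding h_def by simp
      then have "h^d * real (Suc j)^d = 1" by (metis power_mult_distrib power_one)
      ultimately show ?thesis by simp
    qed
    have "real (card Cs) * ((2*(Mb*h))^(d - 1) * (2*(\<epsilon>*h)))
        = (2*real R)^d * (2*Mb)^(d - 1) * (2*\<epsilon>) * (h^(d-1) * h * real (Suc j)^d)"
      unfolding eq1 by (simp only: power_mult_distrib mult_ac)
    with \<open>h^(d-1) * h * real (Suc j)^d = 1\<close> show ?thesis by simp
  qed
  finally have "emeasure (PiM V (\<lambda>_. lborel)) N \<le> ennreal ((2*real R)^d * (2*Mb)^(d - 1) * (2*\<epsilon>))" .
  with Nsets sub show ?thesis unfolding d_def by (intro bexI[of _ N]) auto
qed


lemma sardQ_mono:
  assumes "sardQ V S G \<epsilon> Mb \<delta> x k w" "\<delta>' \<le> \<delta>" "Mb \<le> Mb'"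
  shows "sardQ V S G \<epsilon> Mb' \<delta>' x k w"
proof -
  have "Mb * r \<le> Mb' * r" if "r \<ge> 0" for r using assms(3) that by (simp add: mult_right_mono)
  then show ?thesis using assms(1,2) unfolding sardQ_def by (meson order_trans)
qed

lemma sard:
  fixes V :: "nat set" and S :: "(nat\<Rightarrow>real) set" and G :: "(nat\<Rightarrow>real)\<Rightarrow>(nat\<Rightarrow>real)"
  assumes V: "finite V" "V \<noteq> {}"
    and GP: "\<And>x. x \<in> S \<Longrightarrow> G x \<in> PiE V (\<lambda>_. UNIV)"
    and SP: "S \<subseteq> PiE V (\<lambda>_. UNIV)"
    and H: "\<And>x. x \<in> S \<Longrightarrow> \<exists>Mb k w. k \<in> V \<and> w k = 1 \<and> (\<forall>i\<in>V. \<bar>w i\<bar> \<le> 1) \<and>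
      (\<forall>\<epsilon>>0. \<exists>\<delta>>0. \<forall>r y. 0 \<le> r \<longrightarrow> r < \<delta> \<longrightarrow> y \<in> S \<longrightarrow> (\<forall>i\<in>V. \<bar>y i - x i\<bar> \<le> r) \<longrightarrow>
         (\<forall>i\<in>V. \<bar>G y i - G x i\<bar> \<le> Mb * r) \<and> \<bar>\<Sum>i\<in>V. w i * (G y i - G x i)\<bar> \<le> \<epsilon> * r)"
  shows "\<exists>N \<in> null_sets (PiM V (\<lambda>_. lborel)). G ` S \<subseteq> N"
proof -
  define M where "M = PiM V (\<lambda>_. lborel :: real measure)"
  define d where "d = card V"
  define T where "T \<epsilon> m j = {x\<in>S. (\<forall>i\<in>V. \<bar>x i\<bar> < real m) \<and> (\<exists>k w. sardQ V S G \<epsilon> (real m) (1/real (Suc j)) x k w)}"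
    for \<epsilon> m j
  define K where "K \<epsilon> m = (2*real m)^d * (2*real m)^(d-1) * (2*\<epsilon>)" for \<epsilon> m
  define Nf where "Nf \<epsilon> m j = (SOME N. N\<in>sets M \<and> G ` T \<epsilon> m j \<subseteq> N \<and> emeasure M N \<le> ennreal (K \<epsilon> m))" for \<epsilon> m j
  have Nf: "Nf \<epsilon> m j \<in> sets M \<and> G ` T \<epsilon> m j \<subseteq> Nf \<epsilon> m j \<and> emeasure M (Nf \<epsilon> m j) \<le> ennreal (K \<epsilon> m)"
    if "\<epsilon> \<ge> 0" for \<epsilon> m j
  proof -
    have "\<exists>N\<in>sets M. G ` T \<epsilon> m j \<subseteq> N \<and> emeasure M N \<le> ennreal (K \<epsilon> m)"
      unfolding M_def T_def K_def d_def
      by (rule sard_grid[OF V that _ GP SP]) auto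
    then show ?thesis unfolding Nf_def by (metis (mono_tags, lifting) someI_ex)
  qed
  have Tmono: "T \<epsilon> m j \<subseteq> T \<epsilon> m j'" if "j \<le> j'" for \<epsilon> m j j'
  proof -
    have "1/real (Suc j') \<le> 1/real (Suc j)" using that by (simp add: frac_le)
    then show ?thesis unfolding T_def using sardQ_mono by blast
  qed
  define N' where "N' \<epsilon> m j = (\<Inter>i. Nf \<epsilon> m (j+i))" for \<epsilon> m j
  define E where "E \<epsilon> m = (\<Union>j. N' \<epsilon> m j)" for \<epsilon> m
  define F where "F m = (\<Inter>l. E (1/real (Suc l)) m)" for m
  have N'sets: "N' \<epsilon> m j \<in> sets M" if "\<epsilon> \<ge> 0" for \<epsilon> m j
    unfolding N'_def using Nf[OF that] by (intro sets.countable_INT) auto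
  have N'inc: "incseq (N' \<epsilon> m)" for \<epsilon> m
  proof (rule incseq_SucI)
    fix j show "N' \<epsilon> m j \<subseteq> N' \<epsilon> m (Suc j)"
      unfolding N'_def by (auto simp: INT_iff) (metis add_Suc_shift add_Suc)
  qed
  have N'T: "G ` T \<epsilon> m j \<subseteq> N' \<epsilon> m j" if "\<epsilon> \<ge> 0" for \<epsilon> m j
  proof -
    have "G ` T \<epsilon> m j \<subseteq> Nf \<epsilon> m (j+i)" for i
      using Nf[OF that, of m "j+i"] Tmono[of j "j+i" \<epsilon> m] by auto
    then show ?thesis unfolding N'_def by auto
  qed
  have N'meas: "emeasure M (N' \<epsilon> m j) \<le> ennreal (K \<epsilon> m)" if "\<epsilon> \<ge> 0" for \<epsilon> m j
  proof -
    have sub0: "N' \<epsilon> m j \<subseteq> Nf \<epsilon> m j" unfolding N'_def by (metis INT_lower UNIV_I add_0_right)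
    have "emeasure M (N' \<epsilon> m j) \<le> emeasure M (Nf \<epsilon> m j)"
      using Nf[OF that] sub0 by (intro emeasure_mono) auto
    also have "\<dots> \<le> ennreal (K \<epsilon> m)" using Nf[OF that] by simp
    finally show ?thesis .
  qed
  have Esets: "E \<epsilon> m \<in> sets M" if "\<epsilon> \<ge> 0" for \<epsilon> m
    unfolding E_def using N'sets[OF that] by auto
  have Emeas: "emeasure M (E \<epsilon> m) \<le> ennreal (K \<epsilon> m)" if "\<epsilon> \<ge> 0" for \<epsilon> m
  proof -
    have "emeasure M (E \<epsilon> m) = (SUP j. emeasure M (N' \<epsilon> m j))"
      unfolding E_def using N'sets[OF that] N'inc by (intro SUP_emeasure_incseq[symmetric]) auto
    also have "\<dots> \<le> ennreal (K \<epsilon> m)" using N'meas[OF that] by (intro SUP_least) auto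
    finally show ?thesis .
  qed
  have Fnull: "F m \<in> null_sets M" for m
  proof -
    have Fsets: "F m \<in> sets M" unfolding F_def using Esets by (intro sets.countable_INT) auto
    have Fle: "emeasure M (F m) \<le> ennreal (K (1/real (Suc l)) m)" for l
    proof -
      have "emeasure M (F m) \<le> emeasure M (E (1/real (Suc l)) m)"
        using Esets by (intro emeasure_mono) (auto simp: F_def)
      then show ?thesis using Emeas[of "1/real (Suc l)" m] by simp
    qed
    define C where "C = (2*real m)^d * (2*real m)^(d-1) * 2"
    have C: "C \<ge> 0" unfolding C_def by simp
    have KC: "K (1/real (Suc l)) m = C / real (Suc l)" for l unfolding K_def C_def by simp
    have "emeasure M (F m) \<le> 0"
    proof (rule ennreal_le_epsilon)
      fix e :: real assume e: "0 < e"
      obtain l where l: "C / e < real l" using reals_Archimedean2 by blast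
      have "C / real (Suc l) \<le> e"
      proof -
        have "C < e * real l" using l e by (simp add: divide_less_eq mult.commute)
        then have "C \<le> e * real (Suc l)" using e by (simp add: algebra_simps)
        then show ?thesis by (simp add: divide_le_eq mult.commute)
      qed
      then show "emeasure M (F m) \<le> 0 + ennreal e" using Fle[of l] unfolding KC
        using ennreal_leI order_trans by (simp, blast)
    qed
    then show ?thesis using Fsets by auto
  qed
  have cover: "\<exists>m. G x \<in> F m" if x: "x \<in> S" for x
  proof -
    obtain Mb k w where kw: "k \<in> V" "w k = 1" "\<forall>i\<in>V. \<bar>w i\<bar> \<le> 1" and
      HH: "\<forall>\<epsilon>>0. \<exists>\<delta>>0. \<forall>r y. 0 \<le> r \<longrightarrow> r < \<delta> \<longrightarrow> y \<in> S \<longrightarrow> (\<forall>i\<in>V. \<bar>y i - x i\<bar> \<le> r) \<longrightarrow>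
         (\<forall>i\<in>V. \<bar>G y i - G x i\<bar> \<le> Mb * r) \<and> \<bar>\<Sum>i\<in>V. w i * (G y i - G x i)\<bar> \<le> \<epsilon> * r"
      using H[OF x] by blast
    obtain m :: nat where m: "max Mb (Max ((\<lambda>i. \<bar>x i\<bar>) ` V)) < real m" using reals_Archimedean2 by blast
    have mMb: "Mb \<le> real m" using m by simp
    have mx: "\<bar>x i\<bar> < real m" if "i \<in> V" for i
    proof -
      have "\<bar>x i\<bar> \<le> Max ((\<lambda>i. \<bar>x i\<bar>) ` V)" using V that by (intro Max_ge) auto
      then show ?thesis using m by simp
    qed
    have "G x \<in> E (1/real (Suc l)) m" for l
    proof -
      define \<epsilon> where "\<epsilon> = 1/real (Suc l)"
      have \<epsilon>: "\<epsilon> > 0" unfolding \<epsilon>_def by simp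
      obtain \<delta> where \<delta>: "\<delta> > 0" and D: "\<forall>r y. 0 \<le> r \<longrightarrow> r < \<delta> \<longrightarrow> y \<in> S \<longrightarrow> (\<forall>i\<in>V. \<bar>y i - x i\<bar> \<le> r) \<longrightarrow>
         (\<forall>i\<in>V. \<bar>G y i - G x i\<bar> \<le> Mb * r) \<and> \<bar>\<Sum>i\<in>V. w i * (G y i - G x i)\<bar> \<le> \<epsilon> * r"
        using HH \<epsilon> by blast
      obtain n :: nat where n: "n > 0" "inverse (real n) < \<delta>" using ex_inverse_of_nat_less[OF \<delta>] by blast
      define j where "j = n - 1"
      have j: "1 / real (Suc j) < \<delta>" using n unfolding j_def by (simp add: inverse_eq_divide)
      have "sardQ V S G \<epsilon> Mb (1/real (Suc j)) x k w"
        unfolding sardQ_def using kw D j by auto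
      then have "sardQ V S G \<epsilon> (real m) (1/real (Suc j)) x k w"
        by (rule sardQ_mono) (use mMb in auto)
      then have "x \<in> T \<epsilon> m j" unfolding T_def using x mx by auto
      then have "G x \<in> N' \<epsilon> m j" using N'T[of \<epsilon> m j] \<epsilon> by auto
      then show ?thesis unfolding E_def \<epsilon>_def by auto
    qed
    then show ?thesis unfolding F_def by auto
  qed
  show ?thesis
  proof (intro bexI[of _ "\<Union>m. F m"])
    show "G ` S \<subseteq> (\<Union>m. F m)" using cover by blast
    show "(\<Union>m. F m) \<in> null_sets (PiM V (\<lambda>_. lborel))" using Fnull unfolding M_def by auto
  qed
qed


lemma linalg_inv_bound:
  fixes L :: "nat \<Rightarrow> nat \<Rightarrow> real" and n :: nat
  assumes inj: "\<And>w. (\<forall>j<n. (\<Sum>i<n. w i * L i j) = 0) \<Longrightarrow> (\<forall>i<n. w i = 0)"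
  shows "\<exists>C>0. \<forall>v t. (\<forall>i<n. \<bar>\<Sum>j<n. L i j * v j\<bar> \<le> t) \<longrightarrow> (\<forall>j<n. \<bar>v j\<bar> \<le> C * t)"
proof -
  define A where "A = Matrix.mat n n (\<lambda>(i,j). L i j)"
  have A: "A \<in> carrier_mat n n" unfolding A_def by simp
  have AT: "transpose_mat A \<in> carrier_mat n n" using A by simp
  have "Determinant.det (transpose_mat A) \<noteq> 0"
  proof
    assume "Determinant.det (transpose_mat A) = 0"
    then obtain w where w: "w \<in> carrier_vec n" "w \<noteq> 0\<^sub>v n" "transpose_mat A *\<^sub>v w = 0\<^sub>v n"
      using det_0_iff_vec_prod_zero[OF AT] by blast
    have "\<forall>j<n. (\<Sum>i<n. (w $ i) * L i j) = 0"
    proof (intro allI impI)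
      fix j assume j: "j < n"
      have "(\<Sum>i<n. (w $ i) * L i j) = (transpose_mat A *\<^sub>v w) $ j"
        using j w(1) A unfolding A_def
        by (simp add: scalar_prod_def row_def col_def lessThan_atLeast0 mult.commute)
      also have "\<dots> = (0\<^sub>v n) $ j" by (simp only: w(3))
      also have "\<dots> = 0" using j by simp
      finally show "(\<Sum>i<n. (w $ i) * L i j) = 0" .
    qed
    from inj[OF this] have "w = 0\<^sub>v n" using w(1) by (intro eq_vecI) auto
    with w(2) show False by simp
  qed
  then have "Determinant.det A \<noteq> 0" using det_transpose[OF A] by simp
  from det_non_zero_imp_unit[OF A this] obtain B where B: "B \<in> carrier_mat n n" "B * A = 1\<^sub>m n"
    unfolding Units_def by (auto simp: ring_mat_def)
  define C where "C = 1 + (\<Sum>j<n. \<Sum>i<n. \<bar>B $$ (j,i)\<bar>)"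
  have C: "C > 0" unfolding C_def by (simp add: add_pos_nonneg sum_nonneg)
  have "\<forall>v t. (\<forall>i<n. \<bar>\<Sum>j<n. L i j * v j\<bar> \<le> t) \<longrightarrow> (\<forall>j<n. \<bar>v j\<bar> \<le> C * t)"
  proof (intro allI impI)
    fix v :: "nat \<Rightarrow> real" and t :: real and j
    assume t: "\<forall>i<n. \<bar>\<Sum>j<n. L i j * v j\<bar> \<le> t" and j: "j < n"
    define x where "x = vec n v"
    have x: "x \<in> carrier_vec n" unfolding x_def by simp
    have t0: "t \<ge> 0" using t j by (meson abs_ge_zero order_trans)
    have Ax: "(A *\<^sub>v x) $ i = (\<Sum>j<n. L i j * v j)" if "i < n" for i
      using that unfolding A_def x_def by (simp add: scalar_prod_def row_def lessThan_atLeast0)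
    have "x = (B * A) *\<^sub>v x" unfolding B(2) using x by simp
    also have "\<dots> = B *\<^sub>v (A *\<^sub>v x)" using A B(1) x by simp
    finally have "v j = (B *\<^sub>v (A *\<^sub>v x)) $ j" using j unfolding x_def by (metis index_vec)
    also have "\<dots> = (\<Sum>i<n. B $$ (j,i) * (\<Sum>k<n. L i k * v k))"
      using j B A Ax by (simp add: scalar_prod_def row_def lessThan_atLeast0)
    finally have "\<bar>v j\<bar> = \<bar>\<Sum>i<n. B $$ (j,i) * (\<Sum>k<n. L i k * v k)\<bar>" by simp
    also have "\<dots> \<le> (\<Sum>i<n. \<bar>B $$ (j,i) * (\<Sum>k<n. L i k * v k)\<bar>)" by (rule sum_abs)
    also have "\<dots> \<le> (\<Sum>i<n. \<bar>B $$ (j,i)\<bar> * t)"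
    proof (rule sum_mono)
      fix i assume "i \<in> {..<n}"
      then have "\<bar>\<Sum>k<n. L i k * v k\<bar> \<le> t" using t by auto
      then show "\<bar>B $$ (j,i) * (\<Sum>k<n. L i k * v k)\<bar> \<le> \<bar>B $$ (j,i)\<bar> * t"
        unfolding abs_mult by (intro mult_left_mono) auto
    qed
    also have "\<dots> = (\<Sum>i<n. \<bar>B $$ (j,i)\<bar>) * t" by (simp add: sum_distrib_right)
    also have "\<dots> \<le> C * t"
    proof (intro mult_right_mono t0)
      have "(\<Sum>i<n. \<bar>B $$ (j,i)\<bar>) \<le> (\<Sum>j<n. \<Sum>i<n. \<bar>B $$ (j,i)\<bar>)"
        using j by (intro member_le_sum) (auto intro: sum_nonneg)
      then show "(\<Sum>i<n. \<bar>B $$ (j,i)\<bar>) \<le> C" unfolding C_def by simp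
    qed
    finally show "\<bar>v j\<bar> \<le> C * t" .
  qed
  with C show ?thesis by blast
qed


definition hasd :: "nat set \<Rightarrow> ((nat\<Rightarrow>real) \<Rightarrow> real) \<Rightarrow> (nat \<Rightarrow> real) \<Rightarrow> (nat\<Rightarrow>real) \<Rightarrow> bool" where
 "hasd V f l x \<longleftrightarrow> (\<forall>\<epsilon>>0. \<exists>\<delta>>0. \<forall>r y. 0 \<le> r \<longrightarrow> r < \<delta> \<longrightarrow> y \<in> PiE V (\<lambda>_. UNIV) \<longrightarrow>
     (\<forall>j\<in>V. \<bar>y j - x j\<bar> \<le> r) \<longrightarrow> \<bar>f y - f x - (\<Sum>j\<in>V. l j * (y j - x j))\<bar> \<le> \<epsilon> * r)"

lemma hasd_chain:
  fixes g :: "'a::real_normed_vector \<Rightarrow> real" and b :: "nat \<Rightarrow> 'a" and c :: 'a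
  assumes V: "finite V" and P: "\<And>y. P y = c + (\<Sum>j\<in>V. y j *\<^sub>R b j)"
    and dg: "(g has_derivative Dg) (at (P x))"
  shows "hasd V (\<lambda>y. g (P y)) (\<lambda>j. Dg (b j)) x"
  unfolding hasd_def
proof (intro allI impI)
  fix \<epsilon> :: real assume \<epsilon>: "\<epsilon> > 0"
  from dg have bl: "bounded_linear Dg" and
    ap: "\<forall>e>0. \<exists>d>0. \<forall>q. norm (q - P x) < d \<longrightarrow> norm (g q - g (P x) - Dg (q - P x)) \<le> e * norm (q - P x)"
    unfolding has_derivative_at_alt by auto
  interpret Dg: bounded_linear Dg by (rule bl)
  define A where "A = 1 + (\<Sum>j\<in>V. norm (b j))"
  have A: "A > 0" unfolding A_def by (simp add: add_pos_nonneg sum_nonneg)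
  obtain d where d: "d > 0" and dd: "\<forall>q. norm (q - P x) < d \<longrightarrow> norm (g q - g (P x) - Dg (q - P x)) \<le> (\<epsilon>/A) * norm (q - P x)"
    using ap \<epsilon> A by (meson divide_pos_pos)
  show "\<exists>\<delta>>0. \<forall>r y. 0 \<le> r \<longrightarrow> r < \<delta> \<longrightarrow> y \<in> PiE V (\<lambda>_. UNIV) \<longrightarrow>
     (\<forall>j\<in>V. \<bar>y j - x j\<bar> \<le> r) \<longrightarrow> \<bar>g (P y) - g (P x) - (\<Sum>j\<in>V. Dg (b j) * (y j - x j))\<bar> \<le> \<epsilon> * r"
  proof (intro exI[of _ "d/A"] conjI allI impI)
    show "d/A > 0" using d A by simp
    fix r y assume r: "0 \<le> r" "r < d/A" and y: "y \<in> PiE V (\<lambda>_. UNIV)" and yr: "\<forall>j\<in>V. \<bar>y j - x j\<bar> \<le> r"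
    have diff: "P y - P x = (\<Sum>j\<in>V. (y j - x j) *\<^sub>R b j)"
      unfolding P by (simp add: sum_subtractf[symmetric] scaleR_diff_left)
    have "norm (P y - P x) \<le> (\<Sum>j\<in>V. norm ((y j - x j) *\<^sub>R b j))" unfolding diff by (rule norm_sum)
    also have "\<dots> \<le> (\<Sum>j\<in>V. r * norm (b j))"
      using yr by (intro sum_mono) (auto intro: mult_right_mono)
    also have "\<dots> = r * (\<Sum>j\<in>V. norm (b j))" by (simp add: sum_distrib_left)
    also have "\<dots> \<le> r * A" unfolding A_def using r by (intro mult_left_mono) auto
    finally have nP: "norm (P y - P x) \<le> r * A" .
    have "r * A < d" using r A by (simp add: pos_less_divide_eq)
    with nP have "norm (P y - P x) < d" by simp
    with dd have "norm (g (P y) - g (P x) - Dg (P y - P x)) \<le> (\<epsilon>/A) * norm (P y - P x)" by blast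
    also have "\<dots> \<le> (\<epsilon>/A) * (r * A)" using nP \<epsilon> A by (intro mult_left_mono) auto
    also have "\<dots> = \<epsilon> * r" using A by simp
    finally have *: "norm (g (P y) - g (P x) - Dg (P y - P x)) \<le> \<epsilon> * r" .
    have "Dg (P y - P x) = (\<Sum>j\<in>V. Dg (b j) * (y j - x j))"
      unfolding diff by (simp add: Dg.sum Dg.scaleR mult.commute)
    with * show "\<bar>g (P y) - g (P x) - (\<Sum>j\<in>V. Dg (b j) * (y j - x j))\<bar> \<le> \<epsilon> * r" by simp
  qed
qed


lemma finite_delta:
  fixes P :: "'a \<Rightarrow> real \<Rightarrow> bool"
  assumes "finite V" "\<forall>i\<in>V. \<exists>\<delta>>0. \<forall>r. r < \<delta> \<longrightarrow> P i r"
  shows "\<exists>\<delta>>0. \<forall>i\<in>V. \<forall>r. r < \<delta> \<longrightarrow> P i r"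
  using assms
proof (induction V rule: finite_induct)
  case empty then show ?case by (intro exI[of _ 1]) auto
next
  case (insert i V)
  then obtain \<delta>1 where d1: "\<delta>1 > 0" "\<forall>j\<in>V. \<forall>r. r < \<delta>1 \<longrightarrow> P j r" by auto
  from insert obtain \<delta>2 where d2: "\<delta>2 > 0" "\<forall>r. r < \<delta>2 \<longrightarrow> P i r" by auto
  show ?case using d1 d2 by (intro exI[of _ "min \<delta>1 \<delta>2"]) auto
qed


lemma hasd_all:
  assumes "finite V" "\<forall>i\<in>V. hasd V (f i) (L i) x" "\<epsilon> > 0"
  shows "\<exists>\<delta>>0. \<forall>i\<in>V. \<forall>r y. 0 \<le> r \<longrightarrow> r < \<delta> \<longrightarrow> y \<in> PiE V (\<lambda>_. UNIV) \<longrightarrow>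
     (\<forall>j\<in>V. \<bar>y j - x j\<bar> \<le> r) \<longrightarrow> \<bar>f i y - f i x - (\<Sum>j\<in>V. L i j * (y j - x j))\<bar> \<le> \<epsilon> * r"
proof -
  define Q where "Q i r \<longleftrightarrow> (\<forall>y. 0 \<le> r \<longrightarrow> y \<in> PiE V (\<lambda>_. UNIV) \<longrightarrow>
     (\<forall>j\<in>V. \<bar>y j - x j\<bar> \<le> r) \<longrightarrow> \<bar>f i y - f i x - (\<Sum>j\<in>V. L i j * (y j - x j))\<bar> \<le> \<epsilon> * r)" for i r
  have "\<forall>i\<in>V. \<exists>\<delta>>0. \<forall>r. r < \<delta> \<longrightarrow> Q i r"
  proof
    fix i assume "i \<in> V"
    then have "hasd V (f i) (L i) x" using assms(2) by simp
    then have H: "\<forall>\<epsilon>>0. \<exists>\<delta>>0. \<forall>r y. 0 \<le> r \<longrightarrow> r < \<delta> \<longrightarrow> y \<in> PiE V (\<lambda>_. UNIV) \<longrightarrow>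
     (\<forall>j\<in>V. \<bar>y j - x j\<bar> \<le> r) \<longrightarrow> \<bar>f i y - f i x - (\<Sum>j\<in>V. L i j * (y j - x j))\<bar> \<le> \<epsilon> * r"
      by (simp only: hasd_def)
    have "\<epsilon> > 0 \<longrightarrow> (\<exists>\<delta>>0. \<forall>r y. 0 \<le> r \<longrightarrow> r < \<delta> \<longrightarrow> y \<in> PiE V (\<lambda>_. UNIV) \<longrightarrow>
     (\<forall>j\<in>V. \<bar>y j - x j\<bar> \<le> r) \<longrightarrow> \<bar>f i y - f i x - (\<Sum>j\<in>V. L i j * (y j - x j))\<bar> \<le> \<epsilon> * r)"
      using H by (rule spec)
    then obtain \<delta> where "\<delta> > 0" and "\<forall>r y. 0 \<le> r \<longrightarrow> r < \<delta> \<longrightarrow> y \<in> PiE V (\<lambda>_. UNIV) \<longrightarrow>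
     (\<forall>j\<in>V. \<bar>y j - x j\<bar> \<le> r) \<longrightarrow> \<bar>f i y - f i x - (\<Sum>j\<in>V. L i j * (y j - x j))\<bar> \<le> \<epsilon> * r"
      using assms(3) by blast
    then show "\<exists>\<delta>>0. \<forall>r. r < \<delta> \<longrightarrow> Q i r" unfolding Q_def by auto
  qed
  from finite_delta[OF assms(1) this] obtain \<delta> where "\<delta> > 0" "\<forall>i\<in>V. \<forall>r<\<delta>. Q i r" by auto
  then show ?thesis unfolding Q_def by auto
qed

lemma sard_from_deriv:
  fixes V :: "nat set" and S :: "(nat\<Rightarrow>real) set" and G :: "(nat\<Rightarrow>real)\<Rightarrow>(nat\<Rightarrow>real)"
  assumes V: "finite V" "V \<noteq> {}"
    and GP: "\<And>x. x \<in> S \<Longrightarrow> G x \<in> PiE V (\<lambda>_. UNIV)"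
    and SP: "S \<subseteq> PiE V (\<lambda>_. UNIV)"
    and H: "\<And>x. x \<in> S \<Longrightarrow> \<exists>L. (\<forall>i\<in>V. hasd V (\<lambda>y. G y i) (L i) x) \<and>
              (\<exists>w. (\<forall>j\<in>V. (\<Sum>i\<in>V. w i * L i j) = 0) \<and> (\<exists>i\<in>V. w i \<noteq> 0))"
  shows "\<exists>N \<in> null_sets (PiM V (\<lambda>_. lborel)). G ` S \<subseteq> N"
proof (rule sard[OF V GP SP])
  fix x assume x: "x \<in> S"
  obtain L w i0 where L: "\<forall>i\<in>V. hasd V (\<lambda>y. G y i) (L i) x" and
    w: "\<forall>j\<in>V. (\<Sum>i\<in>V. w i * L i j) = 0" and i0: "i0 \<in> V" "w i0 \<noteq> 0"
    using H[OF x] by blast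
  define m where "m = Max ((\<lambda>i. \<bar>w i\<bar>) ` V)"
  have "m \<in> (\<lambda>i. \<bar>w i\<bar>) ` V" unfolding m_def using V by (intro Max_in) auto
  then obtain k where k: "k \<in> V" "\<bar>w k\<bar> = m" by (metis (no_types, lifting) imageE)
  have wk: "\<bar>w i\<bar> \<le> \<bar>w k\<bar>" if "i \<in> V" for i using k V that unfolding m_def by auto
  have wk0: "w k \<noteq> 0" using wk[OF i0(1)] i0 by auto
  define w' where "w' i = w i / w k" for i
  have w'k: "w' k = 1" using wk0 by (simp add: w'_def)
  have w'b: "\<forall>i\<in>V. \<bar>w' i\<bar> \<le> 1" using wk wk0 by (simp add: w'_def abs_divide divide_le_eq_1)
  have w'0: "(\<Sum>i\<in>V. w' i * L i j) = 0" if "j \<in> V" for j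
  proof -
    have "(\<Sum>i\<in>V. w' i * L i j) = (\<Sum>i\<in>V. w i * L i j) / w k"
      unfolding w'_def by (simp add: sum_divide_distrib)
    then show ?thesis using w that by simp
  qed
  define Mb where "Mb = 1 + (\<Sum>i\<in>V. \<Sum>j\<in>V. \<bar>L i j\<bar>)"
  have LMb: "(\<Sum>j\<in>V. \<bar>L i j\<bar>) + 1 \<le> Mb" if "i \<in> V" for i
  proof -
    have "(\<Sum>j\<in>V. \<bar>L i j\<bar>) \<le> (\<Sum>i\<in>V. \<Sum>j\<in>V. \<bar>L i j\<bar>)"
      using V that by (intro member_le_sum) (auto intro: sum_nonneg)
    then show ?thesis unfolding Mb_def by simp
  qed
  show "\<exists>Mb k w. k \<in> V \<and> w k = 1 \<and> (\<forall>i\<in>V. \<bar>w i\<bar> \<le> 1) \<and>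
      (\<forall>\<epsilon>>0. \<exists>\<delta>>0. \<forall>r y. 0 \<le> r \<longrightarrow> r < \<delta> \<longrightarrow> y \<in> S \<longrightarrow> (\<forall>i\<in>V. \<bar>y i - x i\<bar> \<le> r) \<longrightarrow>
         (\<forall>i\<in>V. \<bar>G y i - G x i\<bar> \<le> Mb * r) \<and> \<bar>\<Sum>i\<in>V. w i * (G y i - G x i)\<bar> \<le> \<epsilon> * r)"
  proof (rule exI[of _ Mb], rule exI[of _ k], rule exI[of _ w'], intro conjI k(1) w'k w'b allI impI)
    fix \<epsilon> :: real assume \<epsilon>: "\<epsilon> > 0"
    define \<epsilon>' where "\<epsilon>' = min 1 (\<epsilon> / real (card V))"
    have cV: "card V > 0" using V by (simp add: card_gt_0_iff)
    have \<epsilon>': "\<epsilon>' > 0" "\<epsilon>' \<le> 1" "real (card V) * \<epsilon>' \<le> \<epsilon>"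
      using \<epsilon> cV by (auto simp: \<epsilon>'_def min_def field_simps)
    obtain \<delta> where \<delta>: "\<delta> > 0" and D: "\<forall>i\<in>V. \<forall>r y. 0 \<le> r \<longrightarrow> r < \<delta> \<longrightarrow> y \<in> PiE V (\<lambda>_. UNIV) \<longrightarrow>
     (\<forall>j\<in>V. \<bar>y j - x j\<bar> \<le> r) \<longrightarrow> \<bar>G y i - G x i - (\<Sum>j\<in>V. L i j * (y j - x j))\<bar> \<le> \<epsilon>' * r"
      using hasd_all[OF V(1) L \<epsilon>'(1)] by blast
    show "\<exists>\<delta>>0. \<forall>r y. 0 \<le> r \<longrightarrow> r < \<delta> \<longrightarrow> y \<in> S \<longrightarrow> (\<forall>i\<in>V. \<bar>y i - x i\<bar> \<le> r) \<longrightarrow>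
         (\<forall>i\<in>V. \<bar>G y i - G x i\<bar> \<le> Mb * r) \<and> \<bar>\<Sum>i\<in>V. w' i * (G y i - G x i)\<bar> \<le> \<epsilon> * r"
    proof (intro exI[of _ \<delta>] conjI \<delta> allI impI ballI)
      fix r y assume r: "0 \<le> r" "r < \<delta>" and yS: "y \<in> S" and yr: "\<forall>i\<in>V. \<bar>y i - x i\<bar> \<le> r"
      have y: "y \<in> PiE V (\<lambda>_. UNIV)" using yS SP by auto
      define e where "e i = G y i - G x i - (\<Sum>j\<in>V. L i j * (y j - x j))" for i
      have e: "\<bar>e i\<bar> \<le> \<epsilon>' * r" if "i \<in> V" for i using D that r y yr unfolding e_def by blast
      have lin: "\<bar>\<Sum>j\<in>V. L i j * (y j - x j)\<bar> \<le> (\<Sum>j\<in>V. \<bar>L i j\<bar>) * r" for i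
      proof -
        have "\<bar>\<Sum>j\<in>V. L i j * (y j - x j)\<bar> \<le> (\<Sum>j\<in>V. \<bar>L i j * (y j - x j)\<bar>)" by (rule sum_abs)
        also have "\<dots> \<le> (\<Sum>j\<in>V. \<bar>L i j\<bar> * r)" unfolding abs_mult using yr
          by (intro sum_mono mult_left_mono) auto
        finally show ?thesis by (simp add: sum_distrib_right)
      qed
      fix i assume i: "i \<in> V"
      have "\<bar>G y i - G x i\<bar> \<le> \<bar>\<Sum>j\<in>V. L i j * (y j - x j)\<bar> + \<bar>e i\<bar>" unfolding e_def by linarith
      also have "\<dots> \<le> (\<Sum>j\<in>V. \<bar>L i j\<bar>) * r + 1 * r"
      proof -
        have "\<epsilon>' * r \<le> 1 * r" using \<epsilon>' r by (intro mult_right_mono) auto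
        then show ?thesis using lin[of i] e[OF i] by linarith
      qed
      also have "\<dots> \<le> Mb * r" using LMb[OF i] r by (metis distrib_right mult_right_mono)
      finally show "\<bar>G y i - G x i\<bar> \<le> Mb * r" .
    next
      fix r y assume r: "0 \<le> r" "r < \<delta>" and yS: "y \<in> S" and yr: "\<forall>i\<in>V. \<bar>y i - x i\<bar> \<le> r"
      have y: "y \<in> PiE V (\<lambda>_. UNIV)" using yS SP by auto
      define e where "e i = G y i - G x i - (\<Sum>j\<in>V. L i j * (y j - x j))" for i
      have e: "\<bar>e i\<bar> \<le> \<epsilon>' * r" if "i \<in> V" for i using D that r y yr unfolding e_def by blast
      have "(\<Sum>i\<in>V. w' i * (\<Sum>j\<in>V. L i j * (y j - x j))) = (\<Sum>j\<in>V. (\<Sum>i\<in>V. w' i * L i j) * (y j - x j))"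
      proof -
        have "(\<Sum>i\<in>V. w' i * (\<Sum>j\<in>V. L i j * (y j - x j))) = (\<Sum>i\<in>V. \<Sum>j\<in>V. w' i * L i j * (y j - x j))"
          by (simp add: sum_distrib_left mult.assoc)
        also have "\<dots> = (\<Sum>j\<in>V. \<Sum>i\<in>V. w' i * L i j * (y j - x j))" by (rule sum.swap)
        also have "\<dots> = (\<Sum>j\<in>V. (\<Sum>i\<in>V. w' i * L i j) * (y j - x j))" by (simp add: sum_distrib_right)
        finally show ?thesis .
      qed
      also have "\<dots> = 0" using w'0 by simp
      finally have z: "(\<Sum>i\<in>V. w' i * (\<Sum>j\<in>V. L i j * (y j - x j))) = 0" .
      have "(\<Sum>i\<in>V. w' i * (G y i - G x i)) = (\<Sum>i\<in>V. w' i * e i) + (\<Sum>i\<in>V. w' i * (\<Sum>j\<in>V. L i j * (y j - x j)))"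
        unfolding e_def by (simp add: sum.distrib[symmetric] algebra_simps)
      also have "\<dots> = (\<Sum>i\<in>V. w' i * e i)" using z by simp
      finally have "\<bar>\<Sum>i\<in>V. w' i * (G y i - G x i)\<bar> \<le> (\<Sum>i\<in>V. \<bar>w' i * e i\<bar>)" by (simp add: sum_abs)
      also have "\<dots> \<le> (\<Sum>i\<in>V. 1 * (\<epsilon>' * r))"
        unfolding abs_mult using w'b e by (intro sum_mono mult_mono) auto
      also have "\<dots> = real (card V) * \<epsilon>' * r" by simp
      also have "\<dots> \<le> \<epsilon> * r" using \<epsilon>'(3) r by (intro mult_right_mono) auto
      finally show "\<bar>\<Sum>i\<in>V. w' i * (G y i - G x i)\<bar> \<le> \<epsilon> * r" .
    qed
  qed
qed


lemma regular_isolated: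
  fixes G :: "(nat\<Rightarrow>real)\<Rightarrow>(nat\<Rightarrow>real)" and n :: nat
  assumes x: "x \<in> PiE {..<n} (\<lambda>_. UNIV)"
    and L: "\<forall>i\<in>{..<n}. hasd {..<n} (\<lambda>y. G y i) (L i) x"
    and inj: "\<And>w. (\<forall>j<n. (\<Sum>i<n. w i * L i j) = 0) \<Longrightarrow> (\<forall>i<n. w i = 0)"
  shows "\<exists>\<delta>>0. \<forall>y\<in>PiE {..<n} (\<lambda>_. UNIV). (\<forall>j<n. \<bar>y j - x j\<bar> < \<delta>) \<longrightarrow> (\<forall>i<n. G y i = G x i) \<longrightarrow> y = x"
proof -
  obtain C0 where C0: "C0 > 0" and CB: "\<forall>v t. (\<forall>i<n. \<bar>\<Sum>j<n. L i j * v j\<bar> \<le> t) \<longrightarrow> (\<forall>j<n. \<bar>v j\<bar> \<le> C0 * t)"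
    using linalg_inv_bound[OF inj] by blast
  define \<epsilon> where "\<epsilon> = 1 / (2 * (real n + 1) * C0)"
  have \<epsilon>: "\<epsilon> > 0" unfolding \<epsilon>_def using C0 by simp
  obtain \<delta>0 where \<delta>0: "\<delta>0 > 0" and D: "\<forall>i\<in>{..<n}. \<forall>r y. 0 \<le> r \<longrightarrow> r < \<delta>0 \<longrightarrow> y \<in> PiE {..<n} (\<lambda>_. UNIV) \<longrightarrow>
     (\<forall>j\<in>{..<n}. \<bar>y j - x j\<bar> \<le> r) \<longrightarrow> \<bar>G y i - G x i - (\<Sum>j\<in>{..<n}. L i j * (y j - x j))\<bar> \<le> \<epsilon> * r"
    using hasd_all[OF _ L \<epsilon>] by blast
  show ?thesis
  proof (intro exI[of _ "\<delta>0 / (real n + 1)"] conjI ballI impI)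
    show "\<delta>0 / (real n + 1) > 0" using \<delta>0 by simp
    fix y assume y: "y \<in> PiE {..<n} (\<lambda>_. UNIV)" and yd: "\<forall>j<n. \<bar>y j - x j\<bar> < \<delta>0 / (real n + 1)"
      and eq: "\<forall>i<n. G y i = G x i"
    define R where "R = (\<Sum>j<n. \<bar>y j - x j\<bar>)"
    have R0: "R \<ge> 0" unfolding R_def by (simp add: sum_nonneg)
    have "R \<le> (\<Sum>j<n. \<delta>0 / (real n + 1))" unfolding R_def using yd by (intro sum_mono) (auto intro: less_imp_le)
    also have "\<dots> = real n * \<delta>0 / (real n + 1)" by simp
    also have "\<dots> < \<delta>0" using \<delta>0 by (simp add: divide_less_eq)
    finally have Rd: "R < \<delta>0" .
    have yR: "\<forall>j\<in>{..<n}. \<bar>y j - x j\<bar> \<le> R" unfolding R_def by (auto intro: member_le_sum)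
    have "\<forall>i<n. \<bar>\<Sum>j<n. L i j * (y j - x j)\<bar> \<le> \<epsilon> * R"
    proof (intro allI impI)
      fix i assume i: "i < n"
      have "\<bar>G y i - G x i - (\<Sum>j\<in>{..<n}. L i j * (y j - x j))\<bar> \<le> \<epsilon> * R" using D i R0 Rd y yR by blast
      then show "\<bar>\<Sum>j<n. L i j * (y j - x j)\<bar> \<le> \<epsilon> * R" using eq i by simp
    qed
    then have b: "\<forall>j<n. \<bar>y j - x j\<bar> \<le> C0 * (\<epsilon> * R)" using CB[rule_format, of "\<lambda>j. y j - x j" "\<epsilon> * R"] by blast
    have X: "(\<Sum>j<n. \<bar>y j - x j\<bar>) \<le> (\<Sum>j<n. C0 * (\<epsilon> * R))" using b by (intro sum_mono) auto
    have "R \<le> (\<Sum>j<n. C0 * (\<epsilon> * R))" using X by (simp only: R_def[symmetric])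
    also have "\<dots> = real n * C0 * \<epsilon> * R" by simp
    also have "real n * C0 * \<epsilon> = real n / (2 * (real n + 1))" unfolding \<epsilon>_def using C0 by simp
    finally have "R \<le> real n / (2 * (real n + 1)) * R" .
    moreover have "real n / (2 * (real n + 1)) < 1" by (simp add: divide_less_eq)
    ultimately have "R = 0" using R0 by (smt (verit) mult_less_cancel_right2)
    then have "\<forall>j\<in>{..<n}. y j = x j" using yR by auto
    then show "y = x" using x y by (intro PiE_ext) auto
  qed
qed


locale jcurve =
  fixes \<gamma> :: "real \<Rightarrow> complex" and t0 :: real
  assumes J: "C1_jordan_param \<gamma>"
begin

definition "\<Gamma> u = \<gamma> (t0 + u)"

lemma per: "\<gamma> (t + 2*pi) = \<gamma> t" using J unfolding C1_jordan_param_def by auto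

lemma per_nat: "\<gamma> (t + 2*pi*real m) = \<gamma> t"
proof (induction m arbitrary: t)
  case (Suc m)
  have "\<gamma> (t + 2*pi*real (Suc m)) = \<gamma> ((t + 2*pi*real m) + 2*pi)" by (simp add: algebra_simps)
  also have "\<dots> = \<gamma> t" using per Suc by simp
  finally show ?case .
qed simp

lemma per_int: "\<gamma> (t + 2*pi* of_int m) = \<gamma> t"
proof (cases "m \<ge> 0")
  case True
  then show ?thesis using per_nat[of t "nat m"] by simp
next
  case False
  have "\<gamma> ((t + 2*pi* of_int m) + 2*pi*real (nat (-m))) = \<gamma> (t + 2*pi* of_int m)" by (rule per_nat)
  moreover have "(t + 2*pi* of_int m) + 2*pi*real (nat (-m)) = t" using False by simp
  ultimately show ?thesis by simp
qed

lemma \<Gamma>_per: "\<Gamma> (u + 2*pi) = \<Gamma> u" "\<Gamma> (u - 2*pi) = \<Gamma> u"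
  unfolding \<Gamma>_def using per[of "t0+u"] per[of "t0 + u - 2*pi"] by (simp_all add: algebra_simps)

lemma inj: "s \<in> {0..<2*pi} \<Longrightarrow> t \<in> {0..<2*pi} \<Longrightarrow> \<gamma> s = \<gamma> t \<Longrightarrow> s = t"
  using J unfolding C1_jordan_param_def by blast

lemma base_inj:
  assumes s: "0 \<le> s" "s \<le> 2*pi" and eq: "\<Gamma> s = \<Gamma> 0"
  shows "s = 0 \<or> s = 2*pi"
proof -
  define m where "m = \<lfloor>t0 / (2*pi)\<rfloor>"
  define r0 where "r0 = t0 - 2*pi* of_int m"
  have r0: "0 \<le> r0" "r0 < 2*pi"
  proof -
    have "of_int m * (2*pi) \<le> t0" "t0 < (of_int m + 1) * (2*pi)"
      unfolding m_def using pi_gt_zero by (auto intro: floor_divide_lower floor_divide_upper)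
    then show "0 \<le> r0" "r0 < 2*pi" unfolding r0_def by (auto simp: algebra_simps)
  qed
  have G: "\<Gamma> u = \<gamma> (r0 + u)" for u
  proof -
    have "\<Gamma> u = \<gamma> ((r0 + u) + 2*pi* of_int m)" unfolding \<Gamma>_def r0_def by (simp add: algebra_simps)
    then show ?thesis by (simp add: per_int)
  qed
  show ?thesis
  proof (cases "r0 + s < 2*pi")
    case True
    then have "r0 + s = r0" using eq G[of s] G[of 0] r0 s by (intro inj) auto
    then show ?thesis by simp
  next
    case False
    have "\<gamma> (r0 + s - 2*pi) = \<gamma> (r0 + s)" using per[of "r0+s-2*pi"] by simp
    then have "r0 + s - 2*pi = r0" using eq G[of s] G[of 0] r0 s False by (intro inj) auto
    then show ?thesis by simp
  qed
qed

lemma C1: "\<exists>D. (\<forall>x. (\<gamma> has_vector_derivative D x) (at x)) \<and> continuous_on UNIV D"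
  using J unfolding C1_jordan_param_def C1_differentiable_on_def by auto

lemma cont_\<gamma>: "isCont \<gamma> x"
  using C1 by (meson has_vector_derivative_continuous)

lemma cont_\<Gamma>: "isCont \<Gamma> x"
  unfolding \<Gamma>_def by (intro continuous_intros isCont_o2[OF _ cont_\<gamma>])

lemma diff_\<Gamma>: "\<Gamma> differentiable (at x)"
proof -
  obtain D where D: "\<And>x. (\<gamma> has_vector_derivative D x) (at x)" using C1 by blast
  have "((\<lambda>u. \<gamma> (t0 + u)) has_vector_derivative D (t0 + x)) (at x)"
  proof -
    have h1: "((\<lambda>u. t0 + u) has_vector_derivative 1) (at x)" by (auto intro!: derivative_eq_intros)
    from vector_diff_chain_at[OF h1 D] show ?thesis by (simp add: comp_def)
  qed
  then show ?thesis unfolding \<Gamma>_def by (auto intro: differentiableI_vector)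
qed

lemma bounded_\<Gamma>: "\<exists>Bd. \<forall>s\<in>{0..2*pi}. cmod (\<Gamma> s) \<le> Bd"
proof -
  have "compact (\<Gamma> ` {0..2*pi})"
    by (intro compact_continuous_image continuous_at_imp_continuous_on) (auto intro: cont_\<Gamma>)
  then obtain Bd where "\<forall>z\<in>\<Gamma> ` {0..2*pi}. norm z \<le> Bd" using compact_imp_bounded bounded_iff by metis
  then show ?thesis by auto
qed

definition "T = vector_derivative \<gamma> (at t0)"

lemma T_nz: "T \<noteq> 0" using J unfolding C1_jordan_param_def T_def by auto

lemma tangent:
  assumes \<eta>: "\<eta> > 0"
  shows "\<exists>\<rho>>0. \<forall>u v. \<bar>u\<bar> < \<rho> \<longrightarrow> \<bar>v\<bar> < \<rho> \<longrightarrow> \<bar>cmod (\<Gamma> u - \<Gamma> v) - cmod T * \<bar>u - v\<bar>\<bar> \<le> \<eta> * \<bar>u - v\<bar>"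
proof -
  obtain D where D: "\<And>x. (\<gamma> has_vector_derivative D x) (at x)" and cD: "continuous_on UNIV D" using C1 by blast
  have TD: "T = D t0" unfolding T_def using D vector_derivative_at by blast
  have "isCont D t0" using cD by (simp add: continuous_on_eq_continuous_at)
  then obtain \<rho> where \<rho>: "\<rho> > 0" and r: "\<And>s. dist s t0 < \<rho> \<Longrightarrow> dist (D s) (D t0) < \<eta>"
    using \<eta> unfolding continuous_at_eps_delta by blast
  define f where "f s = \<Gamma> s - of_real s * T" for s
  have fd: "(f has_derivative (\<lambda>h. h *\<^sub>R (D (t0 + s) - T))) (at s within ball 0 \<rho>)" for s
  proof -
    have "((\<lambda>u. \<gamma> (t0 + u)) has_vector_derivative D (t0 + s)) (at s)"
    proof -
      have h1: "((\<lambda>u. t0 + u) has_vector_derivative 1) (at s)" by (auto intro!: derivative_eq_intros)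
      from vector_diff_chain_at[OF h1 D] show ?thesis by (simp add: comp_def)
    qed
    moreover have "((\<lambda>u. of_real u * T) has_vector_derivative T) (at s)"
      by (auto intro!: derivative_eq_intros simp: has_vector_derivative_def scaleR_conv_of_real)
    ultimately have "(f has_vector_derivative (D (t0 + s) - T)) (at s)"
      unfolding f_def \<Gamma>_def by (intro has_vector_derivative_diff)
    then show ?thesis unfolding has_vector_derivative_def by (rule has_derivative_at_withinI)
  qed
  have fb: "onorm (\<lambda>h. h *\<^sub>R (D (t0 + s) - T)) \<le> \<eta>" if "s \<in> ball 0 \<rho>" for s
  proof -
    have "onorm (\<lambda>h::real. h *\<^sub>R (D (t0 + s) - T)) = onorm (\<lambda>h::real. h) * norm (D (t0 + s) - T)"
      by (rule onorm_scaleR_left) (rule bounded_linear_ident)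
    also have "\<dots> = norm (D (t0 + s) - T)" by (simp add: onorm_id)
    also have "\<dots> \<le> \<eta>" using r[of "t0+s"] that TD by (simp add: dist_norm)
    finally show ?thesis .
  qed
  show ?thesis
  proof (intro exI[of _ \<rho>] conjI allI impI \<rho>)
    fix u v :: real assume u: "\<bar>u\<bar> < \<rho>" and v: "\<bar>v\<bar> < \<rho>"
    have "norm (f u - f v) \<le> \<eta> * norm (u - v)"
      by (rule differentiable_bound[OF convex_ball fd fb]) (use u v in auto)
    moreover have "f u - f v = (\<Gamma> u - \<Gamma> v) - of_real (u - v) * T" unfolding f_def by (simp add: algebra_simps)
    moreover have "cmod (of_real (u - v) * T) = cmod T * \<bar>u - v\<bar>" by (simp add: norm_mult norm_of_real[symmetric] of_real_diff[symmetric] del: of_real_diff)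
    ultimately show "\<bar>cmod (\<Gamma> u - \<Gamma> v) - cmod T * \<bar>u - v\<bar>\<bar> \<le> \<eta> * \<bar>u - v\<bar>"
      by (metis abs_norm_cancel norm_triangle_ineq3 order_trans real_norm_def)
  qed
qed

end


locale polyctx = jcurve + fixes n :: nat assumes n3: "3 \<le> n"
begin

definition sg :: "(nat\<Rightarrow>real) \<Rightarrow> nat \<Rightarrow> real" where
  "sg x i = (if i = 0 then 0 else if i = n then 2*pi else x (i - 1))"
definition Dd :: "(nat\<Rightarrow>real) \<Rightarrow> nat \<Rightarrow> real" where
  "Dd x i = cmod (\<Gamma> (sg x (Suc i)) - \<Gamma> (sg x i))"
definition G :: "(nat\<Rightarrow>real) \<Rightarrow> (nat\<Rightarrow>real)" where
  "G x = (\<lambda>i. if i < n then Dd x i / x (n-1) else undefined)"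
definition U :: "(nat\<Rightarrow>real) set" where
  "U = {x \<in> PiE {..<n} (\<lambda>_. UNIV). 0 < x (n-1) \<and> (\<forall>i<n. sg x i < sg x (Suc i)) \<and>
        (\<forall>i<n. \<Gamma> (sg x (Suc i)) \<noteq> \<Gamma> (sg x i))}"
definition Cr :: "(nat\<Rightarrow>real) set" where
  "Cr = {x\<in>U. \<forall>L. (\<forall>i\<in>{..<n}. hasd {..<n} (\<lambda>y. G y i) (L i) x) \<longrightarrow>
        (\<exists>w. (\<forall>j\<in>{..<n}. (\<Sum>i\<in>{..<n}. w i * L i j) = 0) \<and> (\<exists>i\<in>{..<n}. w i \<noteq> 0))}"

lemma sum_ind_Suc: "(\<Sum>j<n. y j * (if Suc j = i then 1 else 0)) = (if 0 < i \<and> i \<le> n then y (i - 1) else (0::real))"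
proof (cases i)
  case 0 then show ?thesis by simp
next
  case (Suc k)
  have "(\<Sum>j<n. y j * (if Suc j = i then 1 else 0)) = (\<Sum>j<n. if j = k then y j else 0)"
    using Suc by (intro sum.cong) auto
  also have "\<dots> = (if k < n then y k else 0)" by simp
  finally show ?thesis using Suc by auto
qed

lemma diff_one:
  assumes x: "x \<in> U" and i: "i < n"
  shows "\<exists>l. hasd {..<n} (\<lambda>y. G y i) l x"
proof -
  define g :: "real \<times> real \<times> real \<Rightarrow> real" where
    "g q = cmod (\<Gamma> (fst (snd q)) - \<Gamma> (fst q)) / snd (snd q)" for q
  define P where "P y = (sg y i, sg y (Suc i), y (n-1))" for y :: "nat \<Rightarrow> real"
  define b1 :: "nat \<Rightarrow> real" where "b1 j = (if Suc j = i then 1 else 0)" for j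
  define b2 :: "nat \<Rightarrow> real" where "b2 j = (if j = i \<and> Suc i < n then 1 else 0)" for j
  define b3 :: "nat \<Rightarrow> real" where "b3 j = (if j = n - 1 then 1 else 0)" for j
  define b :: "nat \<Rightarrow> real \<times> real \<times> real" where "b j = (b1 j, b2 j, b3 j)" for j
  define c :: "real \<times> real \<times> real" where "c = (0, if Suc i = n then 2*pi else 0, 0)"
  have GP: "G y i = g (P y)" for y unfolding G_def g_def P_def Dd_def using i by simp
  have Pf: "P y = c + (\<Sum>j\<in>{..<n}. y j *\<^sub>R b j)" for y
  proof -
    have S: "(\<Sum>j\<in>{..<n}. y j *\<^sub>R b j) = (\<Sum>j<n. y j * b1 j, \<Sum>j<n. y j * b2 j, \<Sum>j<n. y j * b3 j)"
      unfolding b_def by (simp add: prod_eq_iff fst_sum snd_sum)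
    have s1: "(\<Sum>j<n. y j * b1 j) = sg y i" unfolding b1_def sum_ind_Suc using i by (auto simp: sg_def)
    have s2: "(\<Sum>j<n. y j * b2 j) = (if Suc i < n then y i else 0)"
    proof -
      have "(\<Sum>j<n. y j * b2 j) = (\<Sum>j<n. if j = i then (if Suc i < n then y j else 0) else 0)"
        unfolding b2_def by (intro sum.cong) auto
      then show ?thesis using i by simp
    qed
    have s3: "(\<Sum>j<n. y j * b3 j) = y (n-1)"
    proof -
      have "(\<Sum>j<n. y j * b3 j) = (\<Sum>j<n. if j = n - 1 then y j else 0)"
        unfolding b3_def by (intro sum.cong) auto
      then show ?thesis using n3 by simp
    qed
    show ?thesis unfolding P_def S s1 s2 s3 using i by (auto simp: sg_def c_def)
  qed
  have xU: "0 < x (n-1)" "\<Gamma> (sg x (Suc i)) \<noteq> \<Gamma> (sg x i)" using x i unfolding U_def by auto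
  have "g differentiable (at (P x))"
  proof -
    have c1: "(\<lambda>q::real\<times>real\<times>real. fst (snd q)) differentiable (at (P x))"
      by (rule bounded_linear_imp_differentiable[OF bounded_linear_compose[OF bounded_linear_fst bounded_linear_snd]])
    have c0: "(\<lambda>q::real\<times>real\<times>real. fst q) differentiable (at (P x))"
      by (rule bounded_linear_imp_differentiable[OF bounded_linear_fst])
    have e1: "(\<lambda>q::real\<times>real\<times>real. \<Gamma> (fst (snd q))) differentiable (at (P x))"
      by (rule differentiable_compose[of \<Gamma>, OF diff_\<Gamma> c1])
    have e0: "(\<lambda>q::real\<times>real\<times>real. \<Gamma> (fst q)) differentiable (at (P x))"
      by (rule differentiable_compose[of \<Gamma>, OF diff_\<Gamma> c0])
    have d1: "(\<lambda>q::real\<times>real\<times>real. \<Gamma> (fst (snd q)) - \<Gamma> (fst q)) differentiable (at (P x))"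
      by (rule differentiable_diff[OF e1 e0])
    have d2: "(\<lambda>q::real\<times>real\<times>real. cmod (\<Gamma> (fst (snd q)) - \<Gamma> (fst q))) differentiable (at (P x))"
      by (rule differentiable_compose[of norm, OF _ d1]) (use xU in \<open>simp add: P_def\<close>)
    have d3: "(\<lambda>q::real\<times>real\<times>real. snd (snd q)) differentiable (at (P x))"
      by (rule bounded_linear_imp_differentiable[OF bounded_linear_compose[OF bounded_linear_snd bounded_linear_snd]])
    have "snd (snd (P x)) \<noteq> 0" using xU by (simp add: P_def)
    then show ?thesis unfolding g_def by (rule differentiable_divide[OF d2 d3])
  qed
  then obtain Dg where Dg: "(g has_derivative Dg) (at (P x))" unfolding differentiable_def by blast
  have "hasd {..<n} (\<lambda>y. g (P y)) (\<lambda>j. Dg (b j)) x"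
    by (rule hasd_chain[OF _ Pf Dg]) simp
  then show ?thesis unfolding GP by blast
qed

lemma diff_all:
  assumes x: "x \<in> U"
  shows "\<exists>L. \<forall>i\<in>{..<n}. hasd {..<n} (\<lambda>y. G y i) (L i) x"
proof -
  have "\<forall>i. \<exists>l. i \<in> {..<n} \<longrightarrow> hasd {..<n} (\<lambda>y. G y i) l x" using diff_one[OF x] by auto
  then obtain L where "\<forall>i. i \<in> {..<n} \<longrightarrow> hasd {..<n} (\<lambda>y. G y i) (L i) x" by (rule choice[THEN exE]) 
  then show ?thesis by blast
qed

end


lemma box_compact: "compact (PiE {..<(n::nat)} (\<lambda>_. {-R..R::real}))"
proof -
  define S where "S i = (if i < n then {-R..R} else {undefined})" for i :: nat
  have eq: "PiE {..<n} (\<lambda>_. {-R..R::real}) = PiE UNIV S"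
    unfolding S_def by (auto simp: PiE_def Pi_def extensional_def split: if_splits)
  have "compactin (product_topology (\<lambda>_. euclidean) UNIV) (PiE UNIV S)"
    unfolding compactin_PiE by (auto simp: S_def)
  then show ?thesis unfolding eq euclidean_product_topology by simp
qed

lemma coord_tendsto:
  fixes f :: "'a \<Rightarrow> (nat \<Rightarrow> real)"
  assumes "(f \<longlongrightarrow> l) F"
  shows "((\<lambda>m. f m j) \<longlongrightarrow> l j) F"
proof -
  have "isCont (\<lambda>x::nat\<Rightarrow>real. x j) l"
    using continuous_on_product_coordinates[of j, where 'b=real] continuous_on_eq_continuous_at open_UNIV UNIV_I by blast
  from isCont_tendsto_compose[OF this assms] show ?thesis .
qed

lemma chain_mono:
  fixes s :: "nat \<Rightarrow> real"
  assumes "\<forall>i<n. s i \<le> s (Suc i)" "i \<le> i'" "i' \<le> n"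
  shows "s i \<le> s i'"
  using assms(2,3)
proof (induction i' rule: dec_induct)
  case (step m) then show ?case using assms(1) by (meson Suc_le_lessD order_trans Suc_leD)
qed simp


context polyctx
begin

lemma sg0[simp]: "sg x 0 = 0" and sgn[simp]: "sg x n = 2*pi"
  using n3 by (auto simp: sg_def)

lemma sol_Dd: assumes "x \<in> U" "G x = a" "i < n" shows "Dd x i = x (n-1) * a i"
proof -
  have "x (n-1) > 0" using assms(1) unfolding U_def by auto
  moreover have "Dd x i / x (n-1) = a i" using assms(2,3) unfolding G_def by auto
  ultimately show ?thesis by (simp add: field_simps)
qed

lemma collapse_contra:
  assumes a: "a \<in> polygon_sides n"
    and f: "\<And>m. f m \<in> U" "\<And>m. G (f m) = a"
    and lim: "\<And>i. i \<le> n \<Longrightarrow> (\<lambda>m. sg (f m) i) \<longlonglongrightarrow> s i"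
    and k: "0 < k" "k \<le> n" "\<And>i. i < k \<Longrightarrow> s i = 0" "\<And>i. k \<le> i \<Longrightarrow> i \<le> n \<Longrightarrow> s i = 2*pi"
  shows False
proof -
  define A where "A = a (k-1)"
  define V' where "V' = {..<n} - {k-1}"
  define S where "S = (\<Sum>j\<in>V'. a j)"
  have apos: "\<And>i. i < n \<Longrightarrow> 0 < a i" using a unfolding polygon_sides_def by auto
  have AS: "A < S" using a k unfolding polygon_sides_def A_def S_def V'_def by auto
  have A0: "A > 0" using apos k unfolding A_def by auto
  define cT where "cT = cmod T"
  have cT: "cT > 0" using T_nz unfolding cT_def by simp
  define \<eta> where "\<eta> = cT * (S - A) / (2 * (S + A))"
  have \<eta>: "\<eta> > 0" unfolding \<eta>_def using cT AS A0 by simp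
  have \<eta>cT: "\<eta> < cT"
  proof -
    have "(S - A) / (2 * (S + A)) < 1" using AS A0 by (simp add: divide_less_eq)
    then have "cT * ((S - A) / (2 * (S + A))) < cT * 1" using cT by (intro mult_strict_left_mono) auto
    then show ?thesis unfolding \<eta>_def by simp
  qed
  have key: "(cT + \<eta>) * A < (cT - \<eta>) * S"
  proof -
    have "\<eta> * (S + A) = cT * (S - A) / 2" unfolding \<eta>_def using AS A0 by (simp add: field_simps)
    moreover have "cT * (S - A) > 0" using cT AS by simp
    ultimately have "\<eta> * (S + A) < cT * (S - A)" by linarith
    then show ?thesis by (simp add: algebra_simps)
  qed
  obtain \<rho> where \<rho>: "\<rho> > 0" and tan: "\<And>u v. \<bar>u\<bar> < \<rho> \<Longrightarrow> \<bar>v\<bar> < \<rho> \<Longrightarrow>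
      \<bar>cmod (\<Gamma> u - \<Gamma> v) - cT * \<bar>u - v\<bar>\<bar> \<le> \<eta> * \<bar>u - v\<bar>"
    using tangent[OF \<eta>] unfolding cT_def by blast
  have "\<forall>i\<in>{..n}. eventually (\<lambda>m. \<bar>sg (f m) i - s i\<bar> < \<rho>) sequentially"
  proof
    fix i assume "i \<in> {..n}"
    then have "(\<lambda>m. sg (f m) i) \<longlonglongrightarrow> s i" using lim by auto
    from tendstoD[OF this \<rho>] show "eventually (\<lambda>m. \<bar>sg (f m) i - s i\<bar> < \<rho>) sequentially"
      by (simp add: dist_real_def)
  qed
  from eventually_ball_finite[OF _ this] have "eventually (\<lambda>m. \<forall>i\<in>{..n}. \<bar>sg (f m) i - s i\<bar> < \<rho>) sequentially"
    by simp
  then obtain m where m: "\<forall>i\<in>{..n}. \<bar>sg (f m) i - s i\<bar> < \<rho>"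
    unfolding eventually_sequentially by blast
  define y where "y = f m"
  define l where "l = y (n-1)"
  have yU: "y \<in> U" and yG: "G y = a" using f unfolding y_def by auto
  have l: "l > 0" using yU unfolding U_def l_def by auto
  have Dy: "Dd y i = l * a i" if "i < n" for i using sol_Dd[OF yU yG that] unfolding l_def .
  have incr: "sg y i < sg y (Suc i)" if "i < n" for i using yU that unfolding U_def by auto
  define u where "u i = sg y i - s i" for i
  have u: "\<bar>u i\<bar> < \<rho>" if "i \<le> n" for i using m that unfolding u_def y_def by auto
  have Gu: "\<Gamma> (u i) = \<Gamma> (sg y i)" if "i \<le> n" for i
  proof (cases "i < k")
    case True then show ?thesis using k(3) unfolding u_def by simp
  next
    case False then show ?thesis using k(4)[of i] that \<Gamma>_per(2) unfolding u_def by simp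
  qed
  have Ddu: "Dd y i = cmod (\<Gamma> (u (Suc i)) - \<Gamma> (u i))" if "i < n" for i
    unfolding Dd_def using Gu[of i] Gu[of "Suc i"] that by simp
  have same: "u (Suc i) - u i = sg y (Suc i) - sg y i" if "i < n" "i \<noteq> k - 1" for i
  proof -
    have "s (Suc i) = s i"
    proof (cases "Suc i < k")
      case True then show ?thesis using k(3) by simp
    next
      case False
      then have "k \<le> i" using that k(1) by linarith
      then show ?thesis using k(4) that by simp
    qed
    then show ?thesis unfolding u_def by simp
  qed
  have up: "Dd y i \<le> (cT + \<eta>) * (u (Suc i) - u i)" if "i \<in> V'" for i
  proof -
    have i: "i < n" "i \<noteq> k - 1" using that unfolding V'_def by auto
    have pos: "u (Suc i) - u i > 0" using same[OF i] incr[OF i(1)] by simp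
    have "Dd y i \<le> cT * \<bar>u (Suc i) - u i\<bar> + \<eta> * \<bar>u (Suc i) - u i\<bar>"
      using tan[OF u[of "Suc i"] u[of i]] i Ddu[OF i(1)] by auto
    then show ?thesis using pos by (simp add: algebra_simps)
  qed
  have lo: "Dd y (k-1) \<ge> (cT - \<eta>) * (u (k-1) - u k)"
  proof -
    have kk: "k - 1 < n" "Suc (k-1) = k" using k by auto
    have "Dd y (k-1) \<ge> cT * \<bar>u k - u (k-1)\<bar> - \<eta> * \<bar>u k - u (k-1)\<bar>"
      using tan[OF u[of k] u[of "k-1"]] k(2) Ddu[OF kk(1)] kk(2) by (simp add: abs_le_iff)
    also have "cT * \<bar>u k - u (k-1)\<bar> - \<eta> * \<bar>u k - u (k-1)\<bar> = (cT - \<eta>) * \<bar>u k - u (k-1)\<bar>"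
      by (simp add: algebra_simps)
    also have "\<dots> \<ge> (cT - \<eta>) * (u (k-1) - u k)" using \<eta>cT by (intro mult_left_mono) auto
    finally show ?thesis .
  qed
  have tel: "(\<Sum>i<n. u (Suc i) - u i) = 0"
  proof -
    have "(\<Sum>i<n. u (Suc i) - u i) = u n - u 0" by (rule sum_lessThan_telescope)
    also have "u n = 0" unfolding u_def using k(2) k(4)[of n] by simp
    also have "u 0 = 0" unfolding u_def using k(1) k(3)[of 0] by simp
    finally show ?thesis by simp
  qed
  have split: "(\<Sum>i<n. u (Suc i) - u i) = (u k - u (k-1)) + (\<Sum>i\<in>V'. u (Suc i) - u i)"
  proof -
    have "k - 1 \<in> {..<n}" using k by auto
    then have "(\<Sum>i<n. u (Suc i) - u i) = (u (Suc (k-1)) - u (k-1)) + (\<Sum>i\<in>V'. u (Suc i) - u i)"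
      unfolding V'_def by (simp add: sum.remove)
    moreover have "Suc (k-1) = k" using k by simp
    ultimately show ?thesis by simp
  qed
  define X where "X = (\<Sum>i\<in>V'. u (Suc i) - u i)"
  have UX: "u (k-1) - u k = X" using tel split unfolding X_def by simp
  have "l * S = (\<Sum>i\<in>V'. Dd y i)" unfolding S_def sum_distrib_left using Dy by (intro sum.cong) (auto simp: V'_def)
  also have "\<dots> \<le> (\<Sum>i\<in>V'. (cT + \<eta>) * (u (Suc i) - u i))" using up by (intro sum_mono)
  also have "\<dots> = (cT + \<eta>) * X" unfolding X_def by (simp add: sum_distrib_left)
  finally have lS: "l * S \<le> (cT + \<eta>) * X" .
  have lA: "l * A \<ge> (cT - \<eta>) * X" using lo UX Dy[of "k-1"] k unfolding A_def by auto
  have "(cT - \<eta>) * (l * S) \<le> (cT - \<eta>) * ((cT + \<eta>) * X)" using lS \<eta>cT by (intro mult_left_mono) auto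
  also have "\<dots> = (cT + \<eta>) * ((cT - \<eta>) * X)" by (simp add: algebra_simps)
  also have "\<dots> \<le> (cT + \<eta>) * (l * A)" using lA cT \<eta> by (intro mult_left_mono) auto
  finally have "l * ((cT - \<eta>) * S) \<le> l * ((cT + \<eta>) * A)" by (simp add: algebra_simps)
  then have "(cT - \<eta>) * S \<le> (cT + \<eta>) * A" using l by simp
  with key show False by simp
qed

end


context polyctx
begin

lemma null_crit: "\<exists>N \<in> null_sets (PiM {..<n} (\<lambda>_. lborel)). G ` Cr \<subseteq> N"
proof (rule sard_from_deriv)
  show "finite {..<n}" by simp
  have "0 \<in> {..<n}" using n3 by simp
  then show "{..<n} \<noteq> {}" by blast
  show "G x \<in> PiE {..<n} (\<lambda>_. UNIV)" for x by (auto simp: G_def PiE_def extensional_def)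
  show "Cr \<subseteq> PiE {..<n} (\<lambda>_. UNIV)" unfolding Cr_def U_def by auto
  fix x assume x: "x \<in> Cr"
  then have xU: "x \<in> U" unfolding Cr_def by auto
  obtain L where L: "\<forall>i\<in>{..<n}. hasd {..<n} (\<lambda>y. G y i) (L i) x" using diff_all[OF xU] by blast
  then have "\<exists>w. (\<forall>j\<in>{..<n}. (\<Sum>i\<in>{..<n}. w i * L i j) = 0) \<and> (\<exists>i\<in>{..<n}. w i \<noteq> 0)"
    using x unfolding Cr_def by blast
  with L show "\<exists>L. (\<forall>i\<in>{..<n}. hasd {..<n} (\<lambda>y. G y i) (L i) x) \<and>
              (\<exists>w. (\<forall>j\<in>{..<n}. (\<Sum>i\<in>{..<n}. w i * L i j) = 0) \<and> (\<exists>i\<in>{..<n}. w i \<noteq> 0))" by blast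
qed

lemma iso:
  assumes xU: "x \<in> U" and xC: "x \<notin> Cr"
  shows "\<exists>\<delta>>0. \<forall>y\<in>PiE {..<n} (\<lambda>_. UNIV). (\<forall>j<n. \<bar>y j - x j\<bar> < \<delta>) \<longrightarrow> (\<forall>i<n. G y i = G x i) \<longrightarrow> y = x"
proof -
  obtain L where L: "\<forall>i\<in>{..<n}. hasd {..<n} (\<lambda>y. G y i) (L i) x"
    and nw: "\<not> (\<exists>w. (\<forall>j\<in>{..<n}. (\<Sum>i\<in>{..<n}. w i * L i j) = 0) \<and> (\<exists>i\<in>{..<n}. w i \<noteq> 0))"
    using xU xC unfolding Cr_def by blast
  have x: "x \<in> PiE {..<n} (\<lambda>_. UNIV)" using xU unfolding U_def by auto
  show ?thesis
  proof (rule regular_isolated[OF x L])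
    fix w assume "\<forall>j<n. (\<Sum>i<n. w i * L i j) = 0"
    then show "\<forall>i<n. w i = 0" using nw by auto
  qed
qed

lemma sg_range:
  assumes "\<forall>i<n. sg x i \<le> sg x (Suc i)" "i \<le> n"
  shows "0 \<le> sg x i" "sg x i \<le> 2*pi"
  using chain_mono[OF assms(1), of 0 i] chain_mono[OF assms(1), of i n] assms(2) by auto

lemma U_mono: "x \<in> U \<Longrightarrow> \<forall>i<n. sg x i \<le> sg x (Suc i)"
  unfolding U_def by (auto intro: less_imp_le)

lemma finite_sol:
  assumes aS: "a \<in> PiE {..<n} (\<lambda>_. UNIV)" and aW: "a \<in> polygon_sides n" and aC: "a \<notin> G ` Cr"
  shows "finite {x\<in>U. G x = a}"
proof (rule ccontr)
  define Sol where "Sol = {x\<in>U. G x = a}"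
  assume "infinite {x\<in>U. G x = a}"
  then have inf: "infinite Sol" unfolding Sol_def .
  obtain Bd where Bd: "\<forall>s\<in>{0..2*pi}. cmod (\<Gamma> s) \<le> Bd" using bounded_\<Gamma> by blast
  have a0: "a 0 > 0" using aW n3 unfolding polygon_sides_def by auto
  define R where "R = max (2*pi) (2*Bd / a 0)"
  have SK: "Sol \<subseteq> PiE {..<n} (\<lambda>_. {-R..R})"
  proof
    fix x assume "x \<in> Sol"
    then have xU: "x \<in> U" and xG: "G x = a" unfolding Sol_def by auto
    have xP: "x \<in> PiE {..<n} (\<lambda>_. UNIV)" using xU unfolding U_def by auto
    have mono: "\<forall>i<n. sg x i \<le> sg x (Suc i)" using U_mono[OF xU] .
    have "x j \<in> {-R..R}" if j: "j < n" for j
    proof (cases "j < n - 1")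
      case True
      then have "x j = sg x (Suc j)" by (auto simp: sg_def)
      moreover have "0 \<le> sg x (Suc j)" "sg x (Suc j) \<le> 2*pi" using sg_range[OF mono, of "Suc j"] True by auto
      ultimately show ?thesis unfolding R_def by auto
    next
      case False
      then have jn: "j = n - 1" using j by simp
      have l: "x (n-1) > 0" using xU unfolding U_def by auto
      have "x (n-1) * a 0 = Dd x 0" using sol_Dd[OF xU xG, of 0] n3 by simp
      also have "\<dots> \<le> cmod (\<Gamma> (sg x (Suc 0))) + cmod (\<Gamma> (sg x 0))" unfolding Dd_def by (rule norm_triangle_ineq4)
      also have "\<dots> \<le> Bd + Bd"
        using Bd sg_range[OF mono, of 1] sg_range[OF mono, of 0] n3 by (intro add_mono) auto
      finally have "x (n-1) \<le> 2*Bd / a 0" using a0 by (simp add: field_simps)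
      then show ?thesis unfolding jn R_def using l by auto
    qed
    then show "x \<in> PiE {..<n} (\<lambda>_. {-R..R})" using xP by (auto simp: PiE_def Pi_def)
  qed
  obtain xs where xsK: "xs \<in> PiE {..<n} (\<lambda>_. {-R..R})" and xsl: "xs islimpt Sol"
    using Heine_Borel_imp_Bolzano_Weierstrass[OF box_compact inf SK] by blast
  obtain f where fS: "\<And>m. f m \<in> Sol - {xs}" and flim: "f \<longlonglongrightarrow> xs"
    using xsl unfolding islimpt_sequential by blast
  have fU: "f m \<in> U" and fG: "G (f m) = a" and fne: "f m \<noteq> xs" for m using fS[of m] unfolding Sol_def by auto
  have ctend: "(\<lambda>m. f m j) \<longlonglongrightarrow> xs j" for j using coord_tendsto[OF flim] .
  have sgtend: "(\<lambda>m. sg (f m) i) \<longlonglongrightarrow> sg xs i" for i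
    unfolding sg_def by (cases "i = 0"; cases "i = n") (auto intro: ctend)
  have Ddtend: "(\<lambda>m. Dd (f m) i) \<longlonglongrightarrow> Dd xs i" for i
    unfolding Dd_def by (intro tendsto_norm tendsto_diff isCont_tendsto_compose[OF cont_\<Gamma>] sgtend)
  have Ddxs: "Dd xs i = xs (n-1) * a i" if i: "i < n" for i
  proof -
    have "(\<lambda>m. Dd (f m) i) \<longlonglongrightarrow> xs (n-1) * a i"
      using sol_Dd[OF fU fG i] by (simp add: tendsto_mult_right ctend)
    with Ddtend show ?thesis by (rule LIMSEQ_unique)
  qed
  have lam0: "xs (n-1) \<ge> 0"
    by (rule LIMSEQ_le_const[OF ctend]) (use fU in \<open>auto simp: U_def intro: less_imp_le\<close>)
  have mono: "\<forall>i<n. sg xs i \<le> sg xs (Suc i)"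
  proof (intro allI impI)
    fix i assume "i < n"
    show "sg xs i \<le> sg xs (Suc i)"
      by (rule LIMSEQ_le[OF sgtend sgtend]) (use U_mono[OF fU] \<open>i < n\<close> in auto)
  qed
  have xsP: "xs \<in> PiE {..<n} (\<lambda>_. UNIV)" using xsK by (auto simp: PiE_def Pi_def)
  show False
  proof (cases "xs (n-1) > 0")
    case True
    have Dpos: "Dd xs i > 0" if "i < n" for i
      using Ddxs[OF that] True aW that unfolding polygon_sides_def by auto
    have dist: "\<Gamma> (sg xs (Suc i)) \<noteq> \<Gamma> (sg xs i)" if "i < n" for i
      using Dpos[OF that] unfolding Dd_def by auto
    have strict: "sg xs i < sg xs (Suc i)" if "i < n" for i
      using mono that dist[OF that] by (metis order_le_less)
    have xsU: "xs \<in> U" unfolding U_def using xsP True strict dist by auto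
    have xsG: "G xs = a"
    proof
      fix i show "G xs i = a i"
      proof (cases "i < n")
        case True
        then show ?thesis using Ddxs[OF True] \<open>xs (n-1) > 0\<close> by (simp add: G_def)
      next
        case False
        then show ?thesis using aS by (simp add: G_def PiE_def extensional_def)
      qed
    qed
    have xsC: "xs \<notin> Cr" using aC xsG by auto
    obtain \<delta> where \<delta>: "\<delta> > 0" and D: "\<forall>y\<in>PiE {..<n} (\<lambda>_. UNIV). (\<forall>j<n. \<bar>y j - xs j\<bar> < \<delta>) \<longrightarrow>
        (\<forall>i<n. G y i = G xs i) \<longrightarrow> y = xs"
      using iso[OF xsU xsC] by blast
    have "\<forall>j\<in>{..<n}. eventually (\<lambda>m. \<bar>f m j - xs j\<bar> < \<delta>) sequentially"
    proof
      fix j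
      from tendstoD[OF ctend[of j] \<delta>] show "eventually (\<lambda>m. \<bar>f m j - xs j\<bar> < \<delta>) sequentially"
        by (simp add: dist_real_def)
    qed
    from eventually_ball_finite[OF _ this] have "eventually (\<lambda>m. \<forall>j\<in>{..<n}. \<bar>f m j - xs j\<bar> < \<delta>) sequentially"
      by simp
    then obtain m where m: "\<forall>j\<in>{..<n}. \<bar>f m j - xs j\<bar> < \<delta>" unfolding eventually_sequentially by blast
    have "f m \<in> PiE {..<n} (\<lambda>_. UNIV)" using fU[of m] unfolding U_def by auto
    moreover have "\<forall>i<n. G (f m) i = G xs i" using fG xsG by simp
    ultimately have "f m = xs" using D m by auto
    with fne show False by simp
  next
    case False
    with lam0 have l0: "xs (n-1) = 0" by simp
    have eqs: "\<Gamma> (sg xs (Suc i)) = \<Gamma> (sg xs i)" if "i < n" for i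
      using Ddxs[OF that] l0 unfolding Dd_def by simp
    have G0: "\<Gamma> (sg xs i) = \<Gamma> 0" if "i \<le> n" for i
      using that
    proof (induction i)
      case 0 then show ?case by simp
    next
      case (Suc i) then show ?case using eqs[of i] by simp
    qed
    have two: "sg xs i = 0 \<or> sg xs i = 2*pi" if "i \<le> n" for i
      using base_inj[OF sg_range[OF mono that] G0[OF that]] .
    define k where "k = (LEAST i. sg xs i = 2*pi)"
    have kP: "sg xs k = 2*pi" unfolding k_def by (rule LeastI[of _ n]) simp
    have kn: "k \<le> n" unfolding k_def by (rule Least_le) simp
    have k0: "0 < k" using kP pi_gt_zero by (cases k) auto
    have below: "sg xs i = 0" if "i < k" for i
    proof -
      have "sg xs i \<noteq> 2*pi" using not_less_Least[OF that[unfolded k_def]] by simp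
      then show ?thesis using two[of i] that kn by auto
    qed
    have above: "sg xs i = 2*pi" if "k \<le> i" "i \<le> n" for i
      using chain_mono[OF mono that] kP sg_range[OF mono \<open>i \<le> n\<close>] by auto
    show False
      by (rule collapse_contra[OF aW fU fG sgtend k0 kn below above])
  qed
qed

end


context polyctx
begin

lemma neat_sub:
  assumes aW: "a \<in> polygon_sides n" and aS: "a \<in> PiE {..<n} (\<lambda>_. UNIV)"
  shows "neat_cyclic_params \<gamma> t0 n a \<subseteq> (\<lambda>x. (map x [0..<n-1], x (n-1))) ` {x\<in>U. G x = a}"
proof
  fix p assume p: "p \<in> neat_cyclic_params \<gamma> t0 n a"
  obtain s l where psl: "p = (s, l)" by (cases p)
  have len: "length s = n - 1" and l: "0 < l" and inc: "\<forall>i<n. vparam n s i < vparam n s (Suc i)"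
    and eq: "\<forall>i<n. cmod (\<gamma> (t0 + vparam n s (Suc i)) - \<gamma> (t0 + vparam n s i)) = l * a i"
    using p unfolding psl neat_cyclic_params_def by auto
  define x where "x j = (if j < n - 1 then s ! j else if j = n - 1 then l else undefined)" for j
  have sgx: "sg x i = vparam n s i" if "i \<le> n" for i
  proof -
    have n1: "n - 1 < n" "n \<noteq> 0" using n3 by auto
    show ?thesis
    proof (cases "i = 0 \<or> i = n")
      case True then show ?thesis unfolding sg_def vparam_def by auto
    next
      case False
      then have "i - 1 < n - 1" using that by auto
      then show ?thesis using False unfolding sg_def vparam_def x_def by simp
    qed
  qed
  have apos: "a i > 0" if "i < n" for i using aW that unfolding polygon_sides_def by auto
  have Ddx: "Dd x i = l * a i" if "i < n" for i
    using eq that sgx[of i] sgx[of "Suc i"] unfolding Dd_def \<Gamma>_def by auto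
  have xn: "x (n-1) = l" unfolding x_def by simp
  have xP: "x \<in> PiE {..<n} (\<lambda>_. UNIV)" unfolding x_def using n3 by (auto simp: PiE_def extensional_def)
  have xU: "x \<in> U"
    unfolding U_def
  proof (intro CollectI conjI allI impI xP)
    show "0 < x (n-1)" using xn l by simp
    fix i assume i: "i < n"
    show "sg x i < sg x (Suc i)" using inc i sgx[of i] sgx[of "Suc i"] by simp
    have "Dd x i > 0" using Ddx[OF i] l apos[OF i] by simp
    then show "\<Gamma> (sg x (Suc i)) \<noteq> \<Gamma> (sg x i)" unfolding Dd_def by auto
  qed
  have xG: "G x = a"
  proof
    fix i show "G x i = a i"
    proof (cases "i < n")
      case True then show ?thesis using Ddx[OF True] xn l by (simp add: G_def)
    next
      case False
      show ?thesis using False aS by (simp add: G_def PiE_def extensional_def)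
    qed
  qed
  have "map x [0..<n-1] = s" using len by (intro nth_equalityI) (auto simp: x_def)
  then have "p = (\<lambda>x. (map x [0..<n-1], x (n-1))) x" using xn psl by simp
  with xU xG show "p \<in> (\<lambda>x. (map x [0..<n-1], x (n-1))) ` {x\<in>U. G x = a}" by blast
qed

end

theorem theorem1p6:
  fixes \<gamma> :: "real \<Rightarrow> complex" and n :: nat and t0 :: real
  assumes "C1_jordan_param \<gamma>" and "n \<ge> 3"
  shows "AE a in (\<Pi>\<^sub>M i\<in>{..<n}. lborel).
           a \<in> polygon_sides n \<longrightarrow> finite (neat_cyclic_params \<gamma> t0 n a)"
proof -
  interpret polyctx \<gamma> t0 n by unfold_locales (use assms in auto)
  obtain N where N: "N \<in> null_sets (PiM {..<n} (\<lambda>_. lborel))" and GN: "G ` Cr \<subseteq> N"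
    using null_crit by blast
  show ?thesis
  proof (rule AE_I'[OF N], rule subsetI)
    fix a assume "a \<in> {a \<in> space (PiM {..<n} (\<lambda>_. lborel)). \<not> (a \<in> polygon_sides n \<longrightarrow> finite (neat_cyclic_params \<gamma> t0 n a))}"
    then have a: "a \<in> space (PiM {..<n} (\<lambda>_. lborel))" and aW: "a \<in> polygon_sides n"
      and nf: "infinite (neat_cyclic_params \<gamma> t0 n a)" by auto
    have aS: "a \<in> PiE {..<n} (\<lambda>_. UNIV)" using a by (simp add: space_PiM)
    show "a \<in> N"
    proof (rule ccontr)
      assume "a \<notin> N"
      then have "a \<notin> G ` Cr" using GN by auto
      then have "finite {x\<in>U. G x = a}" using finite_sol[OF aS aW] by blast
      then have "finite (neat_cyclic_params \<gamma> t0 n a)" using neat_sub[OF aW aS] by (rule finite_surj)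
      with nf show False by simp
    qed
  qed
qed


end
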